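(* Let $G\in\mathfrak{M}$, $\phi=\phi_G$, $\operatorname{Arg}=\operatorname{Arg}_G$ and $E=E^G$. Then $$\operatorname{dom}\operatorname{Arg}\setminus(\operatorname{dom}\nabla\phi\cap\operatorname{udom}\operatorname{Arg})=D\cup E,$$ where $D$ is a countable union of sets belonging to $\mathcal{D}$.
   Context: $c(x,y)=(x_1-y_1)(x_2-y_2)$ for $x,y\in\mathbb{R}^2$. $\mathfrak{M}$: family of maximal monotone sets in $\mathbb{R}^2$ (monotone: $c(r,s)\ge0$ for $r,s\in G$; maximal: not a proper subset of a monotone set). $\phi_G(y)=\inf_{x\in G}c(x,y)\in[-\infty,0]$; $\operatorname{dom}\phi=\{\phi>-\infty\}$ (convex). For $y$ in the interior of $\operatorname{dom}\phi$, $\nabla\phi(y)$ is the classical gradient when it exists; for $y$ in the relative boundary of $\operatorname{dom}\phi$, $\nabla\phi(y)$ exists if $\nabla\phi(y^n)$ converges to a common limit for every sequence $y^n\to y$ of interior points of $\operatorname{dom}\phi$ at which $\phi$ is differentiable; $\operatorname{dom}\nabla\phi$ is the set of $y\in\operatorname{dom}\phi$ where $\nabla\phi(y)$ exists. $\operatorname{Arg}_G(y)=\{x\in G:\phi_G(y)=c(x,y)\}$, $\operatorname{dom}\operatorname{Arg}_G=\{y:\operatorname{Arg}_G(y)\neq\emptyset\}$, $\operatorname{udom}\operatorname{Arg}_G=\{y:\operatorname{Arg}_G(y)\text{ is a singleton}\}$. For $i=1,2$, $t\in\mathbb{R}$: $E^G_i(t)=\{x\in G:x_i=t\}$, $\mathcal{T}^G_i=\{t:E^G_i(t)\text{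 has more than one point}\}$, $E^G=\bigcup_{i=1,2}\bigcup_{t\in\mathcal{T}^G_i}E^G_i(t)$. $\mathcal{D}$ is the family of graphs of strictly decreasing functions $h$ defined on closed intervals of $\mathbb{R}$ (possibly a single point, so every singleton of $\mathbb{R}^2$ is in $\mathcal{D}$) such that for some $K>0$, $\frac1K(t-s)\le h(s)-h(t)\le K(t-s)$ for $s<t$. *)

theory Defs
  imports "HOL-Analysis.Analysis"
begin

type_synonym pt = "real \<times> real"

definition cost :: "pt \<Rightarrow> pt \<Rightarrow> real" where
  "cost x y = (fst x - fst y) * (snd x - snd y)"

definition monotone_set :: "pt set \<Rightarrow> bool" where
  "monotone_set G \<longleftrightarrow> (\<forall>r\<in>G. \<forall>s\<in>G. cost r s \<ge> 0)"

definition maximal_monotone :: "pt set \<Rightarrow> bool" where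
  "maximal_monotone G \<longleftrightarrow> monotone_set G \<and> \<not> (\<exists>H. monotone_set H \<and> G \<subset> H)"

definition phi :: "pt set \<Rightarrow> pt \<Rightarrow> ereal" where
  "phi G y = (INF x\<in>G. ereal (cost x y))"

definition dom_phi :: "pt set \<Rightarrow> pt set" where
  "dom_phi G = {y. phi G y > -\<infinity>}"

text \<open>Real-valued version of phi (meaningful on dom phi).\<close>
definition phi_r :: "pt set \<Rightarrow> pt \<Rightarrow> real" where
  "phi_r G y = real_of_ereal (phi G y)"

definition diff_pts :: "pt set \<Rightarrow> pt set" where
  "diff_pts G = {y \<in> interior (dom_phi G). phi_r G differentiable (at y)}"

definition grad_phi :: "pt set \<Rightarrow> pt \<Rightarrow> pt" where
  "grad_phi G y = (THE g. (phi_r G has_derivative (\<lambda>h. g \<bullet> h)) (at y))"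

definition dom_grad :: "pt set \<Rightarrow> pt set" where
  "dom_grad G = {y \<in> dom_phi G.
      (y \<in> interior (dom_phi G) \<and> phi_r G differentiable (at y)) \<or>
      (y \<in> rel_frontier (dom_phi G) \<and>
        (\<exists>L. \<forall>Y::nat \<Rightarrow> pt. (\<forall>n. Y n \<in> diff_pts G) \<longrightarrow> Y \<longlonglongrightarrow> y \<longrightarrow>
              (\<lambda>n. grad_phi G (Y n)) \<longlonglongrightarrow> L))}"

definition Arg :: "pt set \<Rightarrow> pt \<Rightarrow> pt set" where
  "Arg G y = {x \<in> G. phi G y = ereal (cost x y)}"

definition dom_Arg :: "pt set \<Rightarrow> pt set" where
  "dom_Arg G = {y. Arg G y \<noteq> {}}"

definition udom_Arg :: "pt set \<Rightarrow> pt set" where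
  "udom_Arg G = {y. \<exists>x. Arg G y = {x}}"

definition coord :: "nat \<Rightarrow> pt \<Rightarrow> real" where
  "coord i x = (if i = 1 then fst x else snd x)"

definition E_i :: "pt set \<Rightarrow> nat \<Rightarrow> real \<Rightarrow> pt set" where
  "E_i G i t = {x \<in> G. coord i x = t}"

definition T_i :: "pt set \<Rightarrow> nat \<Rightarrow> real set" where
  "T_i G i = {t. \<exists>x y. x \<in> E_i G i t \<and> y \<in> E_i G i t \<and> x \<noteq> y}"

definition E_set :: "pt set \<Rightarrow> pt set" where
  "E_set G = (\<Union>i\<in>{1,2}. \<Union>t\<in>T_i G i. E_i G i t)"

definition class_D :: "pt set set" where
  "class_D = {S. \<exists>a b (h::real \<Rightarrow> real). a \<le> b \<and>
      (\<forall>s\<in>{a..b}. \<forall>t\<in>{a..b}. s < t \<longrightarrow> h t < h s) \<and>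
      (\<exists>K>0. \<forall>s\<in>{a..b}. \<forall>t\<in>{a..b}. s < t \<longrightarrow>
          (t - s) / K \<le> h s - h t \<and> h s - h t \<le> K * (t - s)) \<and>
      S = {(t, h t) | t. t \<in> {a..b}}}"

end

theory Submission
  imports Defs
begin

lemma cost_sym: "cost x y = cost y x"
  unfolding cost_def by (simp add: algebra_simps)

lemma cost_self[simp]: "cost x x = 0" by (simp add: cost_def)

lemma Arg_char: "Arg G y = {x\<in>G. \<forall>z\<in>G. cost x y \<le> cost z y}"
proof -
  have "phi G y = ereal (cost x y) \<longleftrightarrow> (\<forall>z\<in>G. cost x y \<le> cost z y)" if "x \<in> G" for x
  proof
    assume h: "phi G y = ereal (cost x y)"
    show "\<forall>z\<in>G. cost x y \<le> cost z y"
    proof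
      fix z assume "z \<in> G"
      then have "phi G y \<le> ereal (cost z y)" unfolding phi_def by (rule INF_lower)
      with h show "cost x y \<le> cost z y" by simp
    qed
  next
    assume h: "\<forall>z\<in>G. cost x y \<le> cost z y"
    show "phi G y = ereal (cost x y)" unfolding phi_def
      by (rule antisym) (auto intro!: INF_lower INF_greatest that simp: h)
  qed
  then show ?thesis unfolding Arg_def by auto
qed

lemma Arg_memI: "x \<in> G \<Longrightarrow> (\<And>z. z \<in> G \<Longrightarrow> cost x y \<le> cost z y) \<Longrightarrow> x \<in> Arg G y"
  by (auto simp: Arg_char)

lemma Arg_memD: "x \<in> Arg G y \<Longrightarrow> x \<in> G"  "x \<in> Arg G y \<Longrightarrow> z \<in> G \<Longrightarrow> cost x y \<le> cost z y"
  by (auto simp: Arg_char)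

lemma phi_Arg: "x \<in> Arg G y \<Longrightarrow> phi G y = ereal (cost x y)"
  by (simp add: Arg_def)

lemma phi_r_Arg: "x \<in> Arg G y \<Longrightarrow> phi_r G y = cost x y"
  by (simp add: Arg_def phi_r_def)

lemma dom_Arg_dom_phi: "y \<in> dom_Arg G \<Longrightarrow> y \<in> dom_phi G"
  by (auto simp: dom_Arg_def dom_phi_def Arg_def)

lemma phi_le_cost: "z \<in> G \<Longrightarrow> phi G y \<le> ereal (cost z y)"
  unfolding phi_def by (rule INF_lower)

lemma mono_ineq:
  assumes "x \<in> Arg G z" "x' \<in> Arg G z'" "x \<in> G" "x' \<in> G"
  shows "(fst x' - fst x) * (snd z' - snd z) + (snd x' - snd x) * (fst z' - fst z) \<ge> 0"
proof -
  have a: "cost x z \<le> cost x' z" using assms by (auto simp: Arg_char)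
  have b: "cost x' z' \<le> cost x z'" using assms by (auto simp: Arg_char)
  have "cost x z + cost x' z' - cost x' z - cost x z' = - ((fst x' - fst x) * (snd z' - snd z) + (snd x' - snd x) * (fst z' - fst z))"
    unfolding cost_def by (simp add: algebra_simps)
  with a b show ?thesis by linarith
qed

definition BB :: "pt set \<Rightarrow> pt set" where
  "BB G = {y. (\<exists>z\<in>G. fst y < fst z) \<and> (\<exists>z\<in>G. fst z < fst y) \<and> (\<exists>z\<in>G. snd y < snd z) \<and> (\<exists>z\<in>G. snd z < snd y)}"

definition NoEsc :: "pt set \<Rightarrow> pt \<Rightarrow> bool" where
  "NoEsc G y \<longleftrightarrow> (\<exists>\<rho>>0. \<exists>R. \<forall>z\<in>ball y \<rho> \<inter> BB G. \<forall>x\<in>Arg G z. norm x \<le> R)"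

lemma open_BB: "open (BB G)"
proof -
  have "BB G = (\<Union>z\<in>G. {y. fst y < fst z}) \<inter> (\<Union>z\<in>G. {y. fst z < fst y}) \<inter> (\<Union>z\<in>G. {y. snd y < snd z}) \<inter> (\<Union>z\<in>G. {y. snd z < snd y})"
    unfolding BB_def by auto
  also have "open \<dots>"
    by (intro open_Int open_UN ballI open_Collect_less continuous_intros)
  finally show ?thesis .
qed

lemma fst_le_dist: "\<bar>fst a - fst b\<bar> \<le> dist a b"
  using dist_fst_le[of a b] by (simp add: dist_real_def)
lemma snd_le_dist: "\<bar>snd a - snd b\<bar> \<le> dist a b"
  using dist_snd_le[of a b] by (simp add: dist_real_def)
lemma norm_le_abs: "norm (x::pt) \<le> \<bar>fst x\<bar> + \<bar>snd x\<bar>"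
  using norm_Pair_le[of "fst x" "snd x"] by simp
lemma dist_le_abs: "dist (a::pt) b \<le> \<bar>fst a - fst b\<bar> + \<bar>snd a - snd b\<bar>"
  using norm_le_abs[of "a - b"] by (simp add: dist_norm)
lemma abs_fst_le_norm: "\<bar>fst (x::pt)\<bar> \<le> norm x"
  using norm_fst_le[of "fst x" "snd x"] by simp
lemma abs_snd_le_norm: "\<bar>snd (x::pt)\<bar> \<le> norm x"
  using norm_snd_le[of "snd x" "fst x"] by simp

lemma phi_minf: assumes "\<And>r. \<exists>z\<in>G. cost z y < r" shows "y \<notin> dom_phi G"
proof
  assume "y \<in> dom_phi G"
  then have h: "phi G y > -\<infinity>" by (simp add: dom_phi_def)
  have "phi G y \<le> ereal r" for r
    using assms[of r] phi_le_cost[of _ G y] by (meson ereal_less_eq(3) less_imp_le order_trans)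
  then have "phi G y = -\<infinity>" by (metis ereal_bot)
  with h show False by simp
qed

locale mmset =
  fixes G :: "pt set"
  assumes mm: "maximal_monotone G"
begin

lemma mono: "r \<in> G \<Longrightarrow> s \<in> G \<Longrightarrow> cost r s \<ge> 0"
  using mm unfolding maximal_monotone_def monotone_set_def by auto

lemma maxl: "monotone_set H \<Longrightarrow> G \<subseteq> H \<Longrightarrow> H = G"
  using mm unfolding maximal_monotone_def by auto

lemma comparable:
  assumes "r \<in> G" "s \<in> G"
  shows "(fst r \<le> fst s \<and> snd r \<le> snd s) \<or> (fst s \<le> fst r \<and> snd s \<le> snd r)"
proof -
  have "0 \<le> (fst r - fst s) * (snd r - snd s)" using mono[OF assms] by (simp add: cost_def)
  then show ?thesis by (auto simp: zero_le_mult_iff)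
qed

lemma not_in_G: assumes "y \<notin> G" shows "\<exists>z\<in>G. cost z y < 0"
proof (rule ccontr)
  assume "\<not> ?thesis"
  then have h: "\<forall>z\<in>G. cost z y \<ge> 0" by auto
  have "monotone_set (insert y G)"
    unfolding monotone_set_def using h mono by (auto simp: cost_sym)
  then have "insert y G = G" by (rule maxl) auto
  with assms show False by auto
qed

lemma exists_le0: "\<exists>z\<in>G. cost z y \<le> 0"
  using not_in_G[of y] cost_self[of y] by (cases "y \<in> G") force+

lemma Arg_le0: "x \<in> Arg G y \<Longrightarrow> cost x y \<le> 0"
  using exists_le0[of y] by (auto simp: Arg_char)

lemma closed_G: "closed G"
proof -
  have "monotone_set (closure G)"
    unfolding monotone_set_def
  proof (intro ballI)
    fix r s assume r: "r \<in> closure G" and s: "s \<in> closure G"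
    have c: "continuous_on UNIV (\<lambda>p::pt\<times>pt. cost (fst p) (snd p))"
      unfolding cost_def by (intro continuous_intros)
    have "(r, s) \<in> closure (G \<times> G)" using r s by (simp add: closure_Times)
    moreover have "closed {p::pt\<times>pt. 0 \<le> cost (fst p) (snd p)}"
      using c by (intro closed_Collect_le continuous_intros) (auto simp: cost_def intro!: continuous_intros)
    moreover have "G \<times> G \<subseteq> {p. 0 \<le> cost (fst p) (snd p)}" using mono by auto
    ultimately have "(r, s) \<in> {p::pt\<times>pt. 0 \<le> cost (fst p) (snd p)}"
      by (meson closure_minimal subsetD)
    then show "0 \<le> cost r s" by simp
  qed
  then have "closure G = G" by (rule maxl) (rule closure_subset)
  then show ?thesis by (metis closed_closure)
qed

lemma box_absurd1: "(\<forall>z\<in>G. fst z \<le> a \<and> snd z \<le> b) \<Longrightarrow> False"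
proof -
  assume h: "\<forall>z\<in>G. fst z \<le> a \<and> snd z \<le> b"
  define p :: pt where "p = (a+1, b+1)"
  have "monotone_set (insert p G)"
    unfolding monotone_set_def
  proof (intro ballI)
    fix r s assume "r \<in> insert p G" "s \<in> insert p G"
    moreover have hp: "cost p z \<ge> 0" if "z \<in> G" for z
      using h that unfolding cost_def p_def by (auto intro!: mult_nonneg_nonneg)
    ultimately show "0 \<le> cost r s" using mono[of r s] by (metis hp cost_sym cost_self insertE order_refl)
  qed
  then have "insert p G = G" by (rule maxl) auto
  then have "p \<in> G" by auto
  with h show False by (auto simp: p_def)
qed

lemma box_absurd2: "(\<forall>z\<in>G. a \<le> fst z \<and> b \<le> snd z) \<Longrightarrow> False"
proof -
  assume h: "\<forall>z\<in>G. a \<le> fst z \<and> b \<le> snd z"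
  define p :: pt where "p = (a-1, b-1)"
  have "monotone_set (insert p G)"
    unfolding monotone_set_def
  proof (intro ballI)
    fix r s assume "r \<in> insert p G" "s \<in> insert p G"
    moreover have hp: "cost p z \<ge> 0" if "z \<in> G" for z
      using h that unfolding cost_def p_def by (auto intro!: mult_nonpos_nonpos)
    ultimately show "0 \<le> cost r s" using mono[of r s] by (metis hp cost_sym cost_self insertE order_refl)
  qed
  then have "insert p G = G" by (rule maxl) auto
  then have "p \<in> G" by auto
  with h show False by (auto simp: p_def)
qed

lemma dom_sup2: assumes "y \<in> dom_phi G" "e > 0" shows "\<exists>z\<in>G. snd z > snd y - e"
proof (rule ccontr)
  assume "\<not> ?thesis"
  then have h: "\<forall>z\<in>G. snd z \<le> snd y - e" by auto
  have "\<exists>z\<in>G. cost z y < r" for r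
  proof -
    obtain z where z: "z \<in> G" "fst z > fst y + (\<bar>r\<bar> + 1) / e"
      using box_absurd1[of "fst y + (\<bar>r\<bar> + 1) / e" "snd y"] h assms(2) by force
    have p: "fst z - fst y > (\<bar>r\<bar> + 1) / e" using z by simp
    have q: "(\<bar>r\<bar> + 1) / e > 0" using assms(2) by (intro divide_pos_pos) auto
    from p have p': "(fst z - fst y) * e > \<bar>r\<bar> + 1" using assms(2) by (simp add: pos_divide_less_eq)
    have "cost z y = (fst z - fst y) * (snd z - snd y)" by (simp add: cost_def)
    also have "\<dots> \<le> (fst z - fst y) * (- e)"
      using h z p q by (intro mult_left_mono) auto
    also have "\<dots> < r" using p' by linarith
    finally show ?thesis using z by auto
  qed
  then show False using phi_minf assms(1) by blast
qed

lemma dom_inf2: assumes "y \<in> dom_phi G" "e > 0" shows "\<exists>z\<in>G. snd z < snd y + e"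
proof (rule ccontr)
  assume "\<not> ?thesis"
  then have h: "\<forall>z\<in>G. snd z \<ge> snd y + e" by auto
  have "\<exists>z\<in>G. cost z y < r" for r
  proof -
    obtain z where z: "z \<in> G" "fst z < fst y - (\<bar>r\<bar> + 1) / e"
      using box_absurd2[of "fst y - (\<bar>r\<bar> + 1) / e" "snd y"] h assms(2) by force
    have p: "fst y - fst z > (\<bar>r\<bar> + 1) / e" using z by simp
    have q: "(\<bar>r\<bar> + 1) / e > 0" using assms(2) by (intro divide_pos_pos) auto
    from p have p': "(fst y - fst z) * e > \<bar>r\<bar> + 1" using assms(2) by (simp add: pos_divide_less_eq)
    have "cost z y = (fst y - fst z) * (snd y - snd z)" by (simp add: cost_def algebra_simps)
    also have "\<dots> \<le> (fst y - fst z) * (- e)"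
      using h z p q by (intro mult_left_mono) auto
    also have "\<dots> < r" using p' by linarith
    finally show ?thesis using z by auto
  qed
  then show False using phi_minf assms(1) by blast
qed

lemma dom_sup1: assumes "y \<in> dom_phi G" "e > 0" shows "\<exists>z\<in>G. fst z > fst y - e"
proof (rule ccontr)
  assume "\<not> ?thesis"
  then have h: "\<forall>z\<in>G. fst z \<le> fst y - e" by auto
  have "\<exists>z\<in>G. cost z y < r" for r
  proof -
    obtain z where z: "z \<in> G" "snd z > snd y + (\<bar>r\<bar> + 1) / e"
      using box_absurd1[of "fst y" "snd y + (\<bar>r\<bar> + 1) / e"] h assms(2) by force
    have p: "snd z - snd y > (\<bar>r\<bar> + 1) / e" using z by simp
    have q: "(\<bar>r\<bar> + 1) / e > 0" using assms(2) by (intro divide_pos_pos) auto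
    from p have p': "(snd z - snd y) * e > \<bar>r\<bar> + 1" using assms(2) by (simp add: pos_divide_less_eq)
    have "cost z y = (snd z - snd y) * (fst z - fst y)" by (simp add: cost_def)
    also have "\<dots> \<le> (snd z - snd y) * (- e)"
      using h z p q by (intro mult_left_mono) auto
    also have "\<dots> < r" using p' by linarith
    finally show ?thesis using z by auto
  qed
  then show False using phi_minf assms(1) by blast
qed

lemma dom_inf1: assumes "y \<in> dom_phi G" "e > 0" shows "\<exists>z\<in>G. fst z < fst y + e"
proof (rule ccontr)
  assume "\<not> ?thesis"
  then have h: "\<forall>z\<in>G. fst z \<ge> fst y + e" by auto
  have "\<exists>z\<in>G. cost z y < r" for r
  proof -
    obtain z where z: "z \<in> G" "snd z < snd y - (\<bar>r\<bar> + 1) / e"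
      using box_absurd2[of "fst y" "snd y - (\<bar>r\<bar> + 1) / e"] h assms(2) by force
    have p: "snd y - snd z > (\<bar>r\<bar> + 1) / e" using z by simp
    have q: "(\<bar>r\<bar> + 1) / e > 0" using assms(2) by (intro divide_pos_pos) auto
    from p have p': "(snd y - snd z) * e > \<bar>r\<bar> + 1" using assms(2) by (simp add: pos_divide_less_eq)
    have "cost z y = (snd y - snd z) * (fst y - fst z)" by (simp add: cost_def algebra_simps)
    also have "\<dots> \<le> (snd y - snd z) * (- e)"
      using h z p q by (intro mult_left_mono) auto
    also have "\<dots> < r" using p' by linarith
    finally show ?thesis using z by auto
  qed
  then show False using phi_minf assms(1) by blast
qed

lemma BB_above: assumes "y \<in> BB G" obtains w where "w \<in> G" "fst y < fst w" "snd y < snd w"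
proof -
  from assms obtain a c where a: "a\<in>G" "fst y < fst a" and c: "c\<in>G" "snd y < snd c" by (auto simp: BB_def)
  from comparable[OF a(1) c(1)] show ?thesis using a c that by (meson order_less_le_trans)
qed

lemma BB_below: assumes "y \<in> BB G" obtains w where "w \<in> G" "fst w < fst y" "snd w < snd y"
proof -
  from assms obtain a c where a: "a\<in>G" "fst a < fst y" and c: "c\<in>G" "snd c < snd y" by (auto simp: BB_def)
  from comparable[OF a(1) c(1)] show ?thesis using a c that by (meson order_le_less_trans)
qed

lemma box_of_neg:
  assumes w: "w \<in> G" "fst z + d \<le> fst w" "snd z + d \<le> snd w"
    and w': "w' \<in> G" "fst w' + d \<le> fst z" "snd w' + d \<le> snd z" and d: "d > 0"
    and x: "x \<in> G" "cost x z \<le> 0"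
  shows "fst w' \<le> fst x \<and> fst x \<le> fst w \<and> snd w' \<le> snd x \<and> snd x \<le> snd w"
proof -
  have 1: "fst x \<le> fst w \<and> snd x \<le> snd w"
  proof (rule ccontr)
    assume "\<not> ?thesis"
    then have "fst w \<le> fst x \<and> snd w \<le> snd x" using comparable[OF x(1) w(1)] by auto
    then have "d * d \<le> (fst x - fst z) * (snd x - snd z)" using w d by (intro mult_mono) auto
    moreover have "d * d > 0" using d by simp
    ultimately show False using x(2) by (simp add: cost_def)
  qed
  have 2: "fst w' \<le> fst x \<and> snd w' \<le> snd x"
  proof (rule ccontr)
    assume "\<not> ?thesis"
    then have "fst x \<le> fst w' \<and> snd x \<le> snd w'" using comparable[OF x(1) w'(1)] by auto
    then have "d * d \<le> (fst z - fst x) * (snd z - snd x)" using w' d by (intro mult_mono) auto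
    moreover have "d * d > 0" using d by simp
    moreover have "(fst z - fst x) * (snd z - snd x) = cost x z" by (simp add: cost_def algebra_simps)
    ultimately show False using x(2) by simp
  qed
  from 1 2 show ?thesis by simp
qed

lemma LC:
  assumes "y \<in> BB G"
  shows "\<exists>\<rho>>0. \<exists>R. ball y \<rho> \<subseteq> BB G \<and> (\<forall>z\<in>ball y \<rho>. Arg G z \<noteq> {} \<and> (\<forall>x\<in>Arg G z. norm x \<le> R))"
proof -
  obtain w where w: "w \<in> G" "fst y < fst w" "snd y < snd w" using BB_above[OF assms] by blast
  obtain w' where w': "w' \<in> G" "fst w' < fst y" "snd w' < snd y" using BB_below[OF assms] by blast
  define d where "d = min (min (fst w - fst y) (snd w - snd y)) (min (fst y - fst w') (snd y - snd w')) / 2"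
  have d: "d > 0" using w w' by (simp add: d_def)
  have d2: "2*d \<le> fst w - fst y" "2*d \<le> snd w - snd y" "2*d \<le> fst y - fst w'" "2*d \<le> snd y - snd w'"
    by (simp_all add: d_def)
  define R where "R = \<bar>fst w\<bar> + \<bar>fst w'\<bar> + \<bar>snd w\<bar> + \<bar>snd w'\<bar>"
  have near: "fst z + d \<le> fst w \<and> snd z + d \<le> snd w \<and> fst w' + d \<le> fst z \<and> snd w' + d \<le> snd z"
    if "z \<in> ball y d" for z
  proof -
    have "\<bar>fst y - fst z\<bar> < d" "\<bar>snd y - snd z\<bar> < d"
      using that fst_le_dist[of y z] snd_le_dist[of y z] by auto
    then show ?thesis using d2 by linarith
  qed
  have K: "fst w' \<le> fst x \<and> fst x \<le> fst w \<and> snd w' \<le> snd x \<and> snd x \<le> snd w"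
    if "z \<in> ball y d" "x \<in> G" "cost x z \<le> 0" for z x
    using near[OF that(1)] box_of_neg[OF w(1) _ _ w'(1) _ _ d that(2,3)] by blast
  have "ball y d \<subseteq> BB G"
  proof
    fix z assume z: "z \<in> ball y d"
    have "fst z < fst w" "snd z < snd w" "fst w' < fst z" "snd w' < snd z" using near[OF z] d by linarith+
    then show "z \<in> BB G" unfolding BB_def using w(1) w'(1) by blast
  qed
  moreover have "Arg G z \<noteq> {} \<and> (\<forall>x\<in>Arg G z. norm x \<le> R)" if z: "z \<in> ball y d" for z
  proof
    show "\<forall>x\<in>Arg G z. norm x \<le> R"
    proof
      fix x assume x: "x \<in> Arg G z"
      have "fst w' \<le> fst x \<and> fst x \<le> fst w \<and> snd w' \<le> snd x \<and> snd x \<le> snd w"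
        using K[OF z Arg_memD(1)[OF x] Arg_le0[OF x]] .
      then have "\<bar>fst x\<bar> + \<bar>snd x\<bar> \<le> R" unfolding R_def by linarith
      then show "norm x \<le> R" using norm_le_abs[of x] by linarith
    qed
    define KK where "KK = G \<inter> ({fst w'..fst w} \<times> {snd w'..snd w})"
    have cK: "compact KK" unfolding KK_def
      by (intro closed_Int_compact closed_G compact_Times compact_Icc)
    obtain z0 where z0: "z0 \<in> G" "cost z0 z \<le> 0" using exists_le0 by blast
    have z0K: "z0 \<in> KK" using K[OF z z0] z0 unfolding KK_def by (auto simp: mem_Times_iff)
    have "continuous_on KK (\<lambda>x. cost x z)" unfolding cost_def by (intro continuous_intros)
    then obtain xs where xs: "xs \<in> KK" "\<forall>u\<in>KK. cost xs z \<le> cost u z"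
      using continuous_attains_inf[OF cK _] z0K by blast
    have "xs \<in> Arg G z"
    proof (rule Arg_memI)
      show "xs \<in> G" using xs by (simp add: KK_def)
      fix u assume u: "u \<in> G"
      show "cost xs z \<le> cost u z"
      proof (cases "cost u z \<le> 0")
        case True
        then have "u \<in> KK" using K[OF z u] u unfolding KK_def by (auto simp: mem_Times_iff)
        then show ?thesis using xs by auto
      next
        case False
        then show ?thesis using xs(2) z0K z0(2) by force
      qed
    qed
    then show "Arg G z \<noteq> {}" by auto
  qed
  ultimately show ?thesis using d by blast
qed

lemma BB_dom: assumes "y \<in> BB G" shows "y \<in> dom_Arg G"
proof -
  obtain \<rho> R where r: "\<rho>>0" "\<forall>z\<in>ball y \<rho>. Arg G z \<noteq> {} \<and> (\<forall>x\<in>Arg G z. norm x \<le> R)"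
    using LC[OF assms] by blast
  then have "Arg G y \<noteq> {}" by auto
  then show ?thesis by (simp add: dom_Arg_def)
qed

lemma BB_interior: "BB G \<subseteq> interior (dom_phi G)"
  by (intro interior_maximal open_BB) (auto intro: dom_Arg_dom_phi BB_dom)

lemma interior_BB: assumes "y \<in> interior (dom_phi G)" shows "y \<in> BB G"
proof -
  obtain e where e: "e > 0" "ball y e \<subseteq> dom_phi G" using assms mem_interior by blast
  have inb: "p \<in> dom_phi G" if "\<bar>fst p - fst y\<bar> + \<bar>snd p - snd y\<bar> < e" for p
  proof -
    have "dist y p < e" using dist_le_abs[of y p] that by (simp add: abs_minus_commute)
    then show ?thesis using e(2) by auto
  qed
  have e4: "e/4 > 0" using e by simp
  have p1: "(fst y, snd y + e/2) \<in> dom_phi G" "(fst y, snd y - e/2) \<in> dom_phi G"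
     "(fst y + e/2, snd y) \<in> dom_phi G" "(fst y - e/2, snd y) \<in> dom_phi G"
    by (rule inb; use e in simp)+
  obtain a where a: "a \<in> G" "snd a > snd y + e/2 - e/4"
    using dom_sup2[OF p1(1) e4] by auto
  obtain b where b: "b \<in> G" "snd b < snd y - e/2 + e/4"
    using dom_inf2[OF p1(2) e4] by auto
  obtain c where c: "c \<in> G" "fst c > fst y + e/2 - e/4"
    using dom_sup1[OF p1(3) e4] by auto
  obtain d where d: "d \<in> G" "fst d < fst y - e/2 + e/4"
    using dom_inf1[OF p1(4) e4] by auto
  have "snd y < snd a" "snd b < snd y" "fst y < fst c" "fst d < fst y" using a b c d e by linarith+
  then show ?thesis unfolding BB_def using a(1) b(1) c(1) d(1) by blast
qed

lemma Arg_G_self: "y \<in> G \<Longrightarrow> y \<in> Arg G y"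
  by (rule Arg_memI) (auto intro: mono)

end

lemma seq_to:
  assumes "\<And>n. dist (z n) y < 1 / real (Suc n)"
  shows "z \<longlonglongrightarrow> y"
proof (rule metric_LIMSEQ_I)
  fix r :: real assume "r > 0"
  then obtain N where N: "inverse (real (Suc N)) < r" using reals_Archimedean by blast
  have "dist (z n) y < r" if "n \<ge> N" for n
  proof -
    have "1 / real (Suc n) \<le> 1 / real (Suc N)" using that by (intro divide_left_mono) auto
    then show ?thesis using assms[of n] N by (simp add: inverse_eq_divide)
  qed
  then show "\<exists>no. \<forall>n\<ge>no. dist (z n) y < r" by blast
qed

definition gr :: "pt \<Rightarrow> pt \<Rightarrow> pt" where
  "gr x y = (- (snd x - snd y), - (fst x - fst y))"

lemma cost_expand: "cost u z = cost u y + gr u y \<bullet> (z - y) + fst (z - y) * snd (z - y)"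
  unfolding cost_def gr_def by (simp add: inner_prod_def inner_real_def algebra_simps)

lemma norm_gr_diff: "norm (gr u y - gr v y) = norm (u - v)"
proof -
  have "norm (gr u y - gr v y) = sqrt ((snd u - snd v)^2 + (fst u - fst v)^2)"
    by (simp add: gr_def norm_prod_def power2_commute)
  moreover have "norm (u - v) = sqrt ((fst u - fst v)^2 + (snd u - snd v)^2)"
    by (simp add: norm_prod_def)
  ultimately show ?thesis by (simp add: add.commute)
qed

lemma abs_prod_le: "\<bar>fst (h::pt) * snd h\<bar> \<le> norm h * norm h"
proof -
  have "\<bar>fst h\<bar> * \<bar>snd h\<bar> \<le> norm h * norm h"
    by (rule mult_mono) (auto simp: abs_fst_le_norm abs_snd_le_norm)
  then show ?thesis by (simp add: abs_mult)
qed

lemma cost_has_derivative: "((\<lambda>z. cost x z) has_derivative (\<lambda>h. gr x y \<bullet> h)) (at y)"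
proof -
  have "((\<lambda>z. (fst x - fst z) * (snd x - snd z)) has_derivative
      (\<lambda>h. (- fst h) * (snd x - snd y) + (fst x - fst y) * (- snd h))) (at y)"
    by (auto intro!: derivative_eq_intros simp: algebra_simps)
  moreover have "(\<lambda>h. (- fst h) * (snd x - snd y) + (fst x - fst y) * (- snd h)) = (\<lambda>h. gr x y \<bullet> h)"
    by (auto simp: gr_def inner_prod_def algebra_simps)
  ultimately show ?thesis by (simp add: cost_def)
qed

context mmset begin

lemma Arg_limit:
  assumes "\<And>n. x n \<in> Arg G (z n)" "x \<longlonglongrightarrow> xs" "z \<longlonglongrightarrow> y"
  shows "xs \<in> Arg G y"
proof (rule Arg_memI)
  show "xs \<in> G" using closed_sequentially[OF closed_G _ assms(2)] assms(1) Arg_memD(1) by blast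
  fix w assume w: "w \<in> G"
  have "(\<lambda>n. cost (x n) (z n)) \<longlonglongrightarrow> cost xs y"
    unfolding cost_def by (intro tendsto_intros assms(2,3))
  moreover have "(\<lambda>n. cost w (z n)) \<longlonglongrightarrow> cost w y"
    unfolding cost_def by (intro tendsto_intros assms(2,3))
  moreover have "\<And>n. cost (x n) (z n) \<le> cost w (z n)" using assms(1) w Arg_memD(2) by blast
  ultimately show "cost xs y \<le> cost w y" using LIMSEQ_le by blast
qed

lemma usc:
  assumes NE: "\<rho>0 > 0" "\<And>z x. z \<in> ball y \<rho>0 \<inter> BB G \<Longrightarrow> x \<in> Arg G z \<Longrightarrow> norm x \<le> R"
    and V: "open V" "Arg G y \<subseteq> V"
  shows "\<exists>\<rho>>0. \<forall>z\<in>ball y \<rho> \<inter> BB G. Arg G z \<subseteq> V"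
proof (rule ccontr)
  assume "\<not> ?thesis"
  then have h: "\<forall>\<rho>>0. \<exists>z\<in>ball y \<rho> \<inter> BB G. \<exists>x\<in>Arg G z. x \<notin> V" by blast
  have "\<forall>n. \<exists>zx. fst zx \<in> ball y (min \<rho>0 (1 / real (Suc n))) \<inter> BB G \<and> snd zx \<in> Arg G (fst zx) \<and> snd zx \<notin> V"
  proof
    fix n
    have "min \<rho>0 (1 / real (Suc n)) > 0" using NE(1) by simp
    then obtain z x where "z \<in> ball y (min \<rho>0 (1 / real (Suc n))) \<inter> BB G" "x \<in> Arg G z" "x \<notin> V"
      using h by meson
    then show "\<exists>zx. fst zx \<in> ball y (min \<rho>0 (1 / real (Suc n))) \<inter> BB G \<and> snd zx \<in> Arg G (fst zx) \<and> snd zx \<notin> V"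
      by (intro exI[of _ "(z,x)"]) auto
  qed
  then obtain zx where zx: "\<And>n. fst (zx n) \<in> ball y (min \<rho>0 (1 / real (Suc n))) \<inter> BB G"
     "\<And>n. snd (zx n) \<in> Arg G (fst (zx n))" "\<And>n. snd (zx n) \<notin> V"
    by metis
  define z where "z = (\<lambda>n. fst (zx n))"
  define x where "x = (\<lambda>n. snd (zx n))"
  have zb: "z n \<in> ball y \<rho>0 \<inter> BB G" for n using zx(1)[of n] by (auto simp: z_def)
  have xA: "x n \<in> Arg G (z n)" for n using zx(2) by (simp add: x_def z_def)
  have xV: "x n \<notin> V" for n using zx(3) by (simp add: x_def)
  have zl: "z \<longlonglongrightarrow> y"
    by (rule seq_to) (use zx(1) in \<open>auto simp: z_def dist_commute\<close>)
  have "x n \<in> cball 0 R" for n using NE(2)[OF zb xA] by simp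
  then obtain l r where l: "l \<in> cball 0 R" "strict_mono (r::nat\<Rightarrow>nat)" "(x \<circ> r) \<longlonglongrightarrow> l"
    using seq_compactE[OF compact_imp_seq_compact[OF compact_cball]] by metis
  have "l \<in> Arg G y"
    by (rule Arg_limit[of "x \<circ> r" "z \<circ> r"]) (use xA l LIMSEQ_subseq_LIMSEQ[OF zl l(2)] in auto)
  then have "l \<in> V" using V by auto
  then have "eventually (\<lambda>n. (x \<circ> r) n \<in> V) sequentially"
    using topological_tendstoD[OF l(3) V(1)] by blast
  then show False using xV by auto
qed

lemma Danskin:
  assumes y: "y \<in> BB G" and A: "Arg G y = {x}"
  shows "(phi_r G has_derivative (\<lambda>h. gr x y \<bullet> h)) (at y)"
  unfolding has_derivative_at_alt
proof (intro conjI allI impI)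
  show "bounded_linear (\<lambda>h. gr x y \<bullet> h)" by (rule bounded_linear_inner_right)
  fix e :: real assume e: "e > 0"
  obtain \<rho>0 R where r0: "\<rho>0 > 0" "ball y \<rho>0 \<subseteq> BB G" "\<forall>z\<in>ball y \<rho>0. Arg G z \<noteq> {} \<and> (\<forall>x\<in>Arg G z. norm x \<le> R)"
    using LC[OF y] by blast
  have "\<exists>\<rho>>0. \<forall>z\<in>ball y \<rho> \<inter> BB G. Arg G z \<subseteq> ball x (e/2)"
  proof (rule usc[OF r0(1)])
    show "\<And>z x'. z \<in> ball y \<rho>0 \<inter> BB G \<Longrightarrow> x' \<in> Arg G z \<Longrightarrow> norm x' \<le> R" using r0(3) by auto
    show "open (ball x (e/2))" by simp
    show "Arg G y \<subseteq> ball x (e/2)" using A e by simp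
  qed
  then obtain \<rho>1 where r1: "\<rho>1 > 0" "\<forall>z\<in>ball y \<rho>1 \<inter> BB G. Arg G z \<subseteq> ball x (e/2)"
    by blast
  define d where "d = min (min \<rho>0 \<rho>1) (e/2)"
  have d: "d > 0" using r0 r1 e by (simp add: d_def)
  have "norm (phi_r G z - phi_r G y - gr x y \<bullet> (z - y)) \<le> e * norm (z - y)" if z: "norm (z - y) < d" for z
  proof -
    have zb: "z \<in> ball y \<rho>0" "z \<in> ball y \<rho>1" using z by (auto simp: d_def dist_norm norm_minus_commute)
    then have zB: "z \<in> BB G" using r0(2) by auto
    obtain xz where xz: "xz \<in> Arg G z" using r0(3) zb(1) by blast
    have "xz \<in> ball x (e/2)" using r1(2) zb(2) zB xz by blast
    then have xzb: "norm (xz - x) < e/2" by (simp add: dist_norm norm_minus_commute)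
    have xA: "x \<in> Arg G y" using A by auto
    define h where "h = z - y"
    have hn: "norm h < e/2" using z by (simp add: h_def d_def)
    have pz: "phi_r G z = cost xz z" by (rule phi_r_Arg[OF xz])
    have py: "phi_r G y = cost x y" by (rule phi_r_Arg[OF xA])
    have up: "phi_r G z - phi_r G y - gr x y \<bullet> h \<le> fst h * snd h"
    proof -
      have "phi_r G z \<le> cost x z" using pz Arg_memD(2)[OF xz Arg_memD(1)[OF xA]] by simp
      then show ?thesis using cost_expand[of x z y] py by (simp add: h_def)
    qed
    have lo: "phi_r G z - phi_r G y - gr x y \<bullet> h \<ge> (gr xz y - gr x y) \<bullet> h + fst h * snd h"
    proof -
      have "cost x y \<le> cost xz y" using Arg_memD(2)[OF xA Arg_memD(1)[OF xz]] .
      then show ?thesis using cost_expand[of xz z y] pz py by (simp add: h_def inner_diff_left)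
    qed
    have cs: "\<bar>(gr xz y - gr x y) \<bullet> h\<bar> \<le> norm (xz - x) * norm h"
      using Cauchy_Schwarz_ineq2[of "gr xz y - gr x y" h] norm_gr_diff[of xz y x] by simp
    have pp: "\<bar>fst h * snd h\<bar> \<le> (e/2) * norm h"
      proof -
      have "norm h * norm h \<le> (e/2) * norm h" using hn by (intro mult_right_mono) auto
      then show ?thesis using abs_prod_le[of h] by linarith
    qed
    have cs2: "norm (xz - x) * norm h \<le> (e/2) * norm h"
      using xzb by (intro mult_right_mono) auto
    have "\<bar>phi_r G z - phi_r G y - gr x y \<bullet> h\<bar> \<le> e * norm h"
      using up lo cs pp cs2 unfolding abs_le_iff by linarith
    then show ?thesis by (simp add: h_def)
  qed
  then show "\<exists>d>0. \<forall>z. norm (z - y) < d \<longrightarrow> norm (phi_r G z - phi_r G y - gr x y \<bullet> (z - y)) \<le> e * norm (z - y)"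
    using d by blast
qed

lemma touching:
  assumes y: "y \<in> BB G" and D: "(phi_r G has_derivative D) (at y)" and xA: "x \<in> Arg G y"
  shows "D = (\<lambda>h. gr x y \<bullet> h)"
proof -
  obtain \<rho>0 R where r0: "\<rho>0 > 0" "ball y \<rho>0 \<subseteq> BB G" "\<forall>z\<in>ball y \<rho>0. Arg G z \<noteq> {} \<and> (\<forall>x\<in>Arg G z. norm x \<le> R)"
    using LC[OF y] by blast
  have der: "((\<lambda>z. cost x z - phi_r G z) has_derivative (\<lambda>h. gr x y \<bullet> h - D h)) (at y)"
    by (intro has_derivative_diff cost_has_derivative D)
  have "eventually (\<lambda>z. cost x y - phi_r G y \<le> cost x z - phi_r G z) (at y)"
    unfolding eventually_at
  proof (intro exI[of _ \<rho>0] conjI ballI impI)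
    show "\<rho>0 > 0" by fact
    fix z assume "z \<in> UNIV" "z \<noteq> y \<and> dist z y < \<rho>0"
    then have z: "z \<in> ball y \<rho>0" by (simp add: dist_commute)
    obtain xz where xz: "xz \<in> Arg G z" using r0(3) z by blast
    show "cost x y - phi_r G y \<le> cost x z - phi_r G z"
      using phi_r_Arg[OF xz] phi_r_Arg[OF xA] Arg_memD(2)[OF xz Arg_memD(1)[OF xA]] by simp
  qed
  from has_derivative_local_min[OF der this]
  have "\<forall>h. gr x y \<bullet> h - D h = 0" by (simp add: fun_eq_iff)
  then show ?thesis by (auto simp: fun_eq_iff)
qed

lemma grad_eq:
  assumes y: "y \<in> BB G" and d: "phi_r G differentiable (at y)" and xA: "x \<in> Arg G y"
  shows "grad_phi G y = gr x y"
proof -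
  obtain D where D: "(phi_r G has_derivative D) (at y)" using d by (auto simp: differentiable_def)
  have D': "(phi_r G has_derivative (\<lambda>h. gr x y \<bullet> h)) (at y)"
    using touching[OF y D xA] D by simp
  show ?thesis unfolding grad_phi_def
  proof (rule the_equality)
    show "(phi_r G has_derivative (\<lambda>h. gr x y \<bullet> h)) (at y)" by (rule D')
    fix g assume "(phi_r G has_derivative (\<lambda>h. g \<bullet> h)) (at y)"
    then have "(\<lambda>h. g \<bullet> h) = (\<lambda>h. gr x y \<bullet> h)" using has_derivative_unique D' by blast
    then have "g \<bullet> (g - gr x y) = gr x y \<bullet> (g - gr x y)" by metis
    then have "(g - gr x y) \<bullet> (g - gr x y) = 0" by (simp add: inner_diff_left)
    then show "g = gr x y" by simp
  qed
qed

end

context mmset begin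

lemma cost_zero_if: "fst w = fst y \<or> snd w = snd y \<Longrightarrow> cost w y = 0"
  by (auto simp: cost_def)

lemma cost_zero_iff: "cost w y = 0 \<longleftrightarrow> fst w = fst y \<or> snd w = snd y"
  by (auto simp: cost_def)

lemma Arg_on_G: assumes "y \<in> G" shows "Arg G y = {w\<in>G. cost w y = 0}"
proof -
  have h: "\<forall>z\<in>G. 0 \<le> cost z y" using mono assms by (simp add: cost_sym)
  have "w \<in> Arg G y \<longleftrightarrow> w \<in> G \<and> cost w y = 0" for w
  proof
    assume a: "w \<in> Arg G y"
    then have "w\<in>G" "cost w y \<le> cost y y" using Arg_memD assms by blast+
    with h show "w\<in>G \<and> cost w y = 0" by force
  next
    assume "w \<in> G \<and> cost w y = 0" then show "w \<in> Arg G y" using h by (intro Arg_memI) auto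
  qed
  then show ?thesis by blast
qed

lemma E_sub:
  assumes "y \<in> E_set G"
  shows "y \<in> dom_Arg G \<and> y \<notin> udom_Arg G"
proof -
  obtain i t where it: "i \<in> {1,2}" "t \<in> T_i G i" "y \<in> E_i G i t"
    using assms by (auto simp: E_set_def)
  obtain p q where pq: "p \<in> E_i G i t" "q \<in> E_i G i t" "p \<noteq> q" using it(2) by (auto simp: T_i_def)
  have yG: "y \<in> G" using it(3) by (simp add: E_i_def)
  have inA: "w \<in> Arg G y" if "w \<in> E_i G i t" for w
  proof -
    have "coord i w = coord i y" using that it(3) by (simp add: E_i_def)
    then have "cost w y = 0" by (intro cost_zero_if) (auto simp: coord_def split: if_splits)
    then show ?thesis using that yG Arg_on_G by (auto simp: E_i_def)
  qed
  have "p \<in> Arg G y" "q \<in> Arg G y" using inA pq by auto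
  then show ?thesis using pq(3) by (auto simp: dom_Arg_def udom_Arg_def)
qed

lemma G_multi_E:
  assumes "y \<in> G" "u \<in> Arg G y" "u \<noteq> y"
  shows "y \<in> E_set G"
proof -
  have uG: "u \<in> G" using assms(2) Arg_memD(1) by blast
  have "cost u y = 0" using assms Arg_on_G by auto
  then have "fst u = fst y \<or> snd u = snd y" by (simp add: cost_zero_iff)
  then show ?thesis
  proof
    assume h: "fst u = fst y"
    have "y \<in> E_i G 1 (fst y)" "u \<in> E_i G 1 (fst y)" using h uG assms(1) by (simp_all add: E_i_def coord_def)
    then have "fst y \<in> T_i G 1" unfolding T_i_def using assms(3) by blast
    then show ?thesis using assms(1) by (auto simp: E_set_def E_i_def coord_def)
  next
    assume h: "snd u = snd y"
    have "y \<in> E_i G 2 (snd y)" "u \<in> E_i G 2 (snd y)" using h uG assms(1) by (simp_all add: E_i_def coord_def)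
    then have "snd y \<in> T_i G 2" unfolding T_i_def using assms(3) by blast
    then show ?thesis using assms(1) by (auto simp: E_set_def E_i_def coord_def)
  qed
qed

lemma off_G_distinct:
  assumes "y \<notin> G" "u \<in> Arg G y" "v \<in> Arg G y" "u \<noteq> v"
  shows "fst u \<noteq> fst v \<and> snd u \<noteq> snd v"
proof -
  obtain z where z: "z \<in> G" "cost z y < 0" using not_in_G[OF assms(1)] by blast
  have cu: "cost u y < 0" using Arg_memD(2)[OF assms(2) z(1)] z by simp
  have cv: "cost v y < 0" using Arg_memD(2)[OF assms(3) z(1)] z by simp
  have eq: "cost u y = cost v y"
    using Arg_memD(2)[OF assms(2) Arg_memD(1)[OF assms(3)]] Arg_memD(2)[OF assms(3) Arg_memD(1)[OF assms(2)]] by simp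
  show ?thesis
  proof (intro conjI notI)
    assume h: "fst u = fst v"
    then have "snd u \<noteq> snd v" using assms(4) by (metis prod.collapse)
    moreover have "(fst u - fst y) * (snd u - snd v) = 0" using eq h by (simp add: cost_def algebra_simps)
    ultimately have "fst u = fst y" by simp
    then show False using cu by (simp add: cost_def)
  next
    assume h: "snd u = snd v"
    then have "fst u \<noteq> fst v" using assms(4) by (metis prod.collapse)
    moreover have "(snd u - snd y) * (fst u - fst v) = 0" using eq h by (simp add: cost_def algebra_simps)
    ultimately have "snd u = snd y" by simp
    then show False using cu by (simp add: cost_def)
  qed
qed

lemma off_G_order:
  assumes "y \<notin> G" "u \<in> Arg G y" "v \<in> Arg G y" "u \<noteq> v"
  shows "(fst u < fst v \<and> snd u < snd v) \<or> (fst v < fst u \<and> snd v < snd u)"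
  using off_G_distinct[OF assms] comparable[OF Arg_memD(1)[OF assms(2)] Arg_memD(1)[OF assms(3)]]
  by auto

lemma interior_ne: "BB G \<noteq> {} \<Longrightarrow> interior (dom_phi G) \<noteq> {}"
  using BB_interior by blast

lemma dom_grad_B:
  assumes y: "y \<in> BB G" and A: "Arg G y = {x}"
  shows "y \<in> dom_grad G \<and> y \<in> udom_Arg G"
proof -
  have "phi_r G differentiable (at y)" using Danskin[OF y A] by (auto simp: differentiable_def)
  moreover have "y \<in> interior (dom_phi G)" using BB_interior y by blast
  moreover have "y \<in> dom_phi G" using y BB_dom dom_Arg_dom_phi by blast
  ultimately show ?thesis using A by (auto simp: dom_grad_def udom_Arg_def)
qed

lemma dom_grad_bd:
  assumes ne: "BB G \<noteq> {}" and yd: "y \<in> dom_Arg G" and yB: "y \<notin> BB G" and A: "Arg G y = {x}"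
    and NE: "NoEsc G y"
  shows "y \<in> dom_grad G \<and> y \<in> udom_Arg G"
proof -
  have ydom: "y \<in> dom_phi G" using yd dom_Arg_dom_phi by blast
  have "y \<notin> interior (dom_phi G)" using interior_BB yB by blast
  then have "y \<notin> rel_interior (dom_phi G)" using rel_interior_nonempty_interior[OF interior_ne[OF ne]] by simp
  then have rf: "y \<in> rel_frontier (dom_phi G)" using ydom closure_subset by (auto simp: rel_frontier_def)
  obtain \<rho>0 R where r0: "\<rho>0 > 0" "\<forall>z\<in>ball y \<rho>0 \<inter> BB G. \<forall>x\<in>Arg G z. norm x \<le> R"
    using NE by (auto simp: NoEsc_def)
  have lim: "(\<lambda>n. grad_phi G (Y n)) \<longlonglongrightarrow> gr x y" if Y: "\<forall>n. Y n \<in> diff_pts G" "Y \<longlonglongrightarrow> y" for Y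
  proof -
    have YB: "Y n \<in> BB G" for n using Y(1) interior_BB by (auto simp: diff_pts_def)
    have Yd: "phi_r G differentiable (at (Y n))" for n using Y(1) by (auto simp: diff_pts_def)
    define xs where "xs n = (SOME w. w \<in> Arg G (Y n))" for n
    have xsA: "xs n \<in> Arg G (Y n)" for n
      using BB_dom[OF YB[of n]] unfolding xs_def dom_Arg_def by (auto intro: someI_ex)
    have gn: "grad_phi G (Y n) = gr (xs n) (Y n)" for n by (rule grad_eq[OF YB Yd xsA])
    have xl: "xs \<longlonglongrightarrow> x"
    proof (rule metric_LIMSEQ_I)
      fix r :: real assume r: "r > 0"
      have "\<exists>\<rho>>0. \<forall>z\<in>ball y \<rho> \<inter> BB G. Arg G z \<subseteq> ball x r"
      proof (rule usc[OF r0(1)])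
        show "\<And>z x'. z \<in> ball y \<rho>0 \<inter> BB G \<Longrightarrow> x' \<in> Arg G z \<Longrightarrow> norm x' \<le> R" using r0(2) by auto
        show "open (ball x r)" by simp
        show "Arg G y \<subseteq> ball x r" using A r by simp
      qed
      then obtain \<rho>1 where r1: "\<rho>1 > 0" "\<forall>z\<in>ball y \<rho>1 \<inter> BB G. Arg G z \<subseteq> ball x r" by blast
      obtain N where N: "\<forall>n\<ge>N. dist (Y n) y < \<rho>1" using metric_LIMSEQ_D[OF Y(2) r1(1)] by blast
      have "dist (xs n) x < r" if "n \<ge> N" for n
      proof -
        have "Y n \<in> ball y \<rho>1 \<inter> BB G" using N that YB by (auto simp: dist_commute)
        then have "xs n \<in> ball x r" using r1(2) xsA by blast
        then show ?thesis by (simp add: dist_commute)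
      qed
      then show "\<exists>no. \<forall>n\<ge>no. dist (xs n) x < r" by blast
    qed
    have "(\<lambda>n. gr (xs n) (Y n)) \<longlonglongrightarrow> gr x y"
      unfolding gr_def by (intro tendsto_intros xl Y(2))
    then show ?thesis using gn by simp
  qed
  have "\<exists>L. \<forall>Y. (\<forall>n. Y n \<in> diff_pts G) \<longrightarrow> Y \<longlonglongrightarrow> y \<longrightarrow> (\<lambda>n. grad_phi G (Y n)) \<longlonglongrightarrow> L"
    using lim by blast
  then show ?thesis using ydom rf A unfolding dom_grad_def udom_Arg_def by blast
qed

end

definition multi :: "pt set \<Rightarrow> pt \<Rightarrow> bool" where
  "multi G y \<longleftrightarrow> (\<exists>u v. u \<in> Arg G y \<and> v \<in> Arg G y \<and> u \<noteq> v)"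

context mmset begin

lemma HL: "countable {y. snd y = c \<and> y \<notin> G \<and> multi G y}"
proof -
  define S where "S = {y. snd y = c \<and> y \<notin> G \<and> multi G y}"
  have ex: "\<exists>r\<in>\<rat>. \<exists>u\<in>Arg G y. \<exists>v\<in>Arg G y. snd u < r \<and> r < snd v" if yS: "y \<in> S" for y
  proof -
    obtain u v where uv: "u \<in> Arg G y" "v \<in> Arg G y" "u \<noteq> v" "y \<notin> G" using yS unfolding S_def multi_def by blast
    from off_G_order[OF uv(4) uv(1,2,3)]
    obtain a b where ab: "a \<in> Arg G y" "b \<in> Arg G y" "snd a < snd b" using uv by blast
    obtain r where "r \<in> \<rat>" "snd a < r" "r < snd b" using Rats_dense_in_real[OF ab(3)] by blast
    then show ?thesis using ab by blast
  qed
  define rr where "rr y = (SOME r. r\<in>\<rat> \<and> (\<exists>u\<in>Arg G y. \<exists>v\<in>Arg G y. snd u < r \<and> r < snd v))" for y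
  have rr: "rr y \<in> \<rat> \<and> (\<exists>u\<in>Arg G y. \<exists>v\<in>Arg G y. snd u < rr y \<and> rr y < snd v)" if "y \<in> S" for y
  proof -
    have "\<exists>r. r\<in>\<rat> \<and> (\<exists>u\<in>Arg G y. \<exists>v\<in>Arg G y. snd u < r \<and> r < snd v)" using ex[OF that] by blast
    then show ?thesis unfolding rr_def by (rule someI_ex)
  qed
  have lt: "rr y < rr y'" if h1: "y \<in> S" and h2: "y' \<in> S" and h3: "fst y < fst y'" for y y'
  proof -
    obtain u v where uv: "u \<in> Arg G y" "v \<in> Arg G y" "snd u < rr y" "rr y < snd v" using rr[OF h1] by blast
    obtain u' v' where uv': "u' \<in> Arg G y'" "v' \<in> Arg G y'" "snd u' < rr y'" "rr y' < snd v'" using rr[OF h2] by blast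
    have "snd y' = snd y" using h1 h2 by (simp add: S_def)
    then have "(snd u' - snd v) * (fst y' - fst y) \<ge> 0"
      using mono_ineq[OF uv(2) uv'(1) Arg_memD(1)[OF uv(2)] Arg_memD(1)[OF uv'(1)]] by simp
    then have "snd v \<le> snd u'" using h3 by (simp add: zero_le_mult_iff)
    then show ?thesis using uv uv' by linarith
  qed
  have inj: "inj_on rr S"
  proof (rule inj_onI)
    fix y y' assume yy: "y \<in> S" "y' \<in> S" "rr y = rr y'"
    have "snd y = snd y'" using yy by (simp add: S_def)
    moreover have "fst y = fst y'"
      using lt[OF yy(1,2)] lt[OF yy(2,1)] yy(3) by (metis less_irrefl linorder_neqE_linordered_idom)
    ultimately show "y = y'" by (simp add: prod_eq_iff)
  qed
  have "rr ` S \<subseteq> \<rat>" using rr by auto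
  then have "countable (rr ` S)" using countable_rat countable_subset by blast
  then have "countable S" using countable_image_inj_on inj by blast
  then show ?thesis by (simp add: S_def)
qed

lemma VL: "countable {y. fst y = c \<and> y \<notin> G \<and> multi G y}"
proof -
  define S where "S = {y. fst y = c \<and> y \<notin> G \<and> multi G y}"
  have ex: "\<exists>r\<in>\<rat>. \<exists>u\<in>Arg G y. \<exists>v\<in>Arg G y. fst u < r \<and> r < fst v" if yS: "y \<in> S" for y
  proof -
    obtain u v where uv: "u \<in> Arg G y" "v \<in> Arg G y" "u \<noteq> v" "y \<notin> G" using yS unfolding S_def multi_def by blast
    from off_G_order[OF uv(4) uv(1,2,3)]
    obtain a b where ab: "a \<in> Arg G y" "b \<in> Arg G y" "fst a < fst b" using uv by blast
    obtain r where "r \<in> \<rat>" "fst a < r" "r < fst b" using Rats_dense_in_real[OF ab(3)] by blast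
    then show ?thesis using ab by blast
  qed
  define rr where "rr y = (SOME r. r\<in>\<rat> \<and> (\<exists>u\<in>Arg G y. \<exists>v\<in>Arg G y. fst u < r \<and> r < fst v))" for y
  have rr: "rr y \<in> \<rat> \<and> (\<exists>u\<in>Arg G y. \<exists>v\<in>Arg G y. fst u < rr y \<and> rr y < fst v)" if "y \<in> S" for y
  proof -
    have "\<exists>r. r\<in>\<rat> \<and> (\<exists>u\<in>Arg G y. \<exists>v\<in>Arg G y. fst u < r \<and> r < fst v)" using ex[OF that] by blast
    then show ?thesis unfolding rr_def by (rule someI_ex)
  qed
  have lt: "rr y < rr y'" if h1: "y \<in> S" and h2: "y' \<in> S" and h3: "snd y < snd y'" for y y'
  proof -
    obtain u v where uv: "u \<in> Arg G y" "v \<in> Arg G y" "fst u < rr y" "rr y < fst v" using rr[OF h1] by blast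
    obtain u' v' where uv': "u' \<in> Arg G y'" "v' \<in> Arg G y'" "fst u' < rr y'" "rr y' < fst v'" using rr[OF h2] by blast
    have "fst y' = fst y" using h1 h2 by (simp add: S_def)
    then have "(fst u' - fst v) * (snd y' - snd y) \<ge> 0"
      using mono_ineq[OF uv(2) uv'(1) Arg_memD(1)[OF uv(2)] Arg_memD(1)[OF uv'(1)]] by simp
    then have "fst v \<le> fst u'" using h3 by (simp add: zero_le_mult_iff)
    then show ?thesis using uv uv' by linarith
  qed
  have inj: "inj_on rr S"
  proof (rule inj_onI)
    fix y y' assume yy: "y \<in> S" "y' \<in> S" "rr y = rr y'"
    have "fst y = fst y'" using yy by (simp add: S_def)
    moreover have "snd y = snd y'"
      using lt[OF yy(1,2)] lt[OF yy(2,1)] yy(3) by (metis less_irrefl linorder_neqE_linordered_idom)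
    ultimately show "y = y'" by (simp add: prod_eq_iff)
  qed
  have "rr ` S \<subseteq> \<rat>" using rr by auto
  then have "countable (rr ` S)" using countable_rat countable_subset by blast
  then have "countable S" using countable_image_inj_on inj by blast
  then show ?thesis by (simp add: S_def)
qed

lemma line_same_lemma:
  assumes "\<And>y y'. y \<in> P \<Longrightarrow> y' \<in> P \<Longrightarrow> f y = f y'"
    and "\<And>c. countable {y. f y = c \<and> y \<notin> G \<and> multi G y}"
  shows "countable {y\<in>P. y \<notin> G \<and> multi G y}"
proof (cases "P = {}")
  case True then show ?thesis by simp
next
  case False
  then obtain y0 where "y0 \<in> P" by blast
  then have "{y\<in>P. y \<notin> G \<and> multi G y} \<subseteq> {y. f y = f y0 \<and> y \<notin> G \<and> multi G y}" using assms(1) by blast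
  then show ?thesis using assms(2) countable_subset by blast
qed

lemma top_same: "y \<in> dom_phi G \<Longrightarrow> y' \<in> dom_phi G \<Longrightarrow> \<forall>z\<in>G. snd z \<le> snd y \<Longrightarrow> \<forall>z\<in>G. snd z \<le> snd y' \<Longrightarrow> snd y = snd y'"
proof -
  have *: "snd a \<le> snd b" if ha: "a \<in> dom_phi G" and hb: "\<forall>z\<in>G. snd z \<le> snd b" for a b
  proof (rule field_le_epsilon)
    fix e :: real assume "e > 0"
    obtain z where "z \<in> G" "snd z > snd a - e" using dom_sup2[OF ha \<open>0 < e\<close>] by blast
    then show "snd a \<le> snd b + e" using hb by force
  qed
  assume "y \<in> dom_phi G" "y' \<in> dom_phi G" "\<forall>z\<in>G. snd z \<le> snd y" "\<forall>z\<in>G. snd z \<le> snd y'"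
  then show "snd y = snd y'" using *[of y y'] *[of y' y] by simp
qed

lemma bot_same: "y \<in> dom_phi G \<Longrightarrow> y' \<in> dom_phi G \<Longrightarrow> \<forall>z\<in>G. snd y \<le> snd z \<Longrightarrow> \<forall>z\<in>G. snd y' \<le> snd z \<Longrightarrow> snd y = snd y'"
proof -
  have *: "snd b \<le> snd a" if ha: "a \<in> dom_phi G" and hb: "\<forall>z\<in>G. snd b \<le> snd z" for a b
  proof (rule field_le_epsilon)
    fix e :: real assume "e > 0"
    obtain z where "z \<in> G" "snd z < snd a + e" using dom_inf2[OF ha \<open>0 < e\<close>] by blast
    then show "snd b \<le> snd a + e" using hb by force
  qed
  assume "y \<in> dom_phi G" "y' \<in> dom_phi G" "\<forall>z\<in>G. snd y \<le> snd z" "\<forall>z\<in>G. snd y' \<le> snd z"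
  then show "snd y = snd y'" using *[of y y'] *[of y' y] by simp
qed

lemma right_same: "y \<in> dom_phi G \<Longrightarrow> y' \<in> dom_phi G \<Longrightarrow> \<forall>z\<in>G. fst z \<le> fst y \<Longrightarrow> \<forall>z\<in>G. fst z \<le> fst y' \<Longrightarrow> fst y = fst y'"
proof -
  have *: "fst a \<le> fst b" if ha: "a \<in> dom_phi G" and hb: "\<forall>z\<in>G. fst z \<le> fst b" for a b
  proof (rule field_le_epsilon)
    fix e :: real assume "e > 0"
    obtain z where "z \<in> G" "fst z > fst a - e" using dom_sup1[OF ha \<open>0 < e\<close>] by blast
    then show "fst a \<le> fst b + e" using hb by force
  qed
  assume "y \<in> dom_phi G" "y' \<in> dom_phi G" "\<forall>z\<in>G. fst z \<le> fst y" "\<forall>z\<in>G. fst z \<le> fst y'"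
  then show "fst y = fst y'" using *[of y y'] *[of y' y] by simp
qed

lemma left_same: "y \<in> dom_phi G \<Longrightarrow> y' \<in> dom_phi G \<Longrightarrow> \<forall>z\<in>G. fst y \<le> fst z \<Longrightarrow> \<forall>z\<in>G. fst y' \<le> fst z \<Longrightarrow> fst y = fst y'"
proof -
  have *: "fst b \<le> fst a" if ha: "a \<in> dom_phi G" and hb: "\<forall>z\<in>G. fst b \<le> fst z" for a b
  proof (rule field_le_epsilon)
    fix e :: real assume "e > 0"
    obtain z where "z \<in> G" "fst z < fst a + e" using dom_inf1[OF ha \<open>0 < e\<close>] by blast
    then show "fst b \<le> fst a + e" using hb by force
  qed
  assume "y \<in> dom_phi G" "y' \<in> dom_phi G" "\<forall>z\<in>G. fst y \<le> fst z" "\<forall>z\<in>G. fst y' \<le> fst z"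
  then show "fst y = fst y'" using *[of y y'] *[of y' y] by simp
qed

lemma LineMulti_countable: "countable {y \<in> dom_phi G. y \<notin> BB G \<and> y \<notin> G \<and> multi G y}"
proof -
  define P1 where "P1 = {y \<in> dom_phi G. \<forall>z\<in>G. snd z \<le> snd y}"
  define P2 where "P2 = {y \<in> dom_phi G. \<forall>z\<in>G. snd y \<le> snd z}"
  define P3 where "P3 = {y \<in> dom_phi G. \<forall>z\<in>G. fst z \<le> fst y}"
  define P4 where "P4 = {y \<in> dom_phi G. \<forall>z\<in>G. fst y \<le> fst z}"
  have "{y \<in> dom_phi G. y \<notin> BB G \<and> y \<notin> G \<and> multi G y} \<subseteq>
     {y\<in>P1. y \<notin> G \<and> multi G y} \<union> {y\<in>P2. y \<notin> G \<and> multi G y} \<union> {y\<in>P3. y \<notin> G \<and> multi G y} \<union> {y\<in>P4. y \<notin> G \<and> multi G y}"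
    unfolding P1_def P2_def P3_def P4_def BB_def by (auto simp: not_less)
  moreover have "countable {y\<in>P1. y \<notin> G \<and> multi G y}"
    by (rule line_same_lemma[where f=snd]) (auto simp: P1_def intro: top_same HL)
  moreover have "countable {y\<in>P2. y \<notin> G \<and> multi G y}"
    by (rule line_same_lemma[where f=snd]) (auto simp: P2_def intro: bot_same HL)
  moreover have "countable {y\<in>P3. y \<notin> G \<and> multi G y}"
    by (rule line_same_lemma[where f=fst]) (auto simp: P3_def intro: right_same VL)
  moreover have "countable {y\<in>P4. y \<notin> G \<and> multi G y}"
    by (rule line_same_lemma[where f=fst]) (auto simp: P4_def intro: left_same VL)
  ultimately show ?thesis by (meson countable_Un countable_subset)
qed

end

definition EscA :: "pt set \<Rightarrow> pt \<Rightarrow> bool" where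
  "EscA G y \<longleftrightarrow> (\<forall>\<rho>>0. \<forall>M. \<exists>z\<in>ball y \<rho> \<inter> BB G. \<exists>x\<in>Arg G z. fst x > M \<and> snd x \<le> snd z)"
definition EscB :: "pt set \<Rightarrow> pt \<Rightarrow> bool" where
  "EscB G y \<longleftrightarrow> (\<forall>\<rho>>0. \<forall>M. \<exists>z\<in>ball y \<rho> \<inter> BB G. \<exists>x\<in>Arg G z. fst x < - M \<and> snd z \<le> snd x)"
definition EscC :: "pt set \<Rightarrow> pt \<Rightarrow> bool" where
  "EscC G y \<longleftrightarrow> (\<forall>\<rho>>0. \<forall>M. \<exists>z\<in>ball y \<rho> \<inter> BB G. \<exists>x\<in>Arg G z. snd x > M \<and> fst x \<le> fst z)"
definition EscD :: "pt set \<Rightarrow> pt \<Rightarrow> bool" where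
  "EscD G y \<longleftrightarrow> (\<forall>\<rho>>0. \<forall>M. \<exists>z\<in>ball y \<rho> \<inter> BB G. \<exists>x\<in>Arg G z. snd x < - M \<and> fst z \<le> fst x)"

lemma inf_esc:
  assumes inf: "infinite {k. \<exists>z\<in>ball y (1/real (Suc k)) \<inter> BB G. \<exists>x\<in>Arg G z. P (real k) z x}"
    and mono: "\<And>a b z x. P a z x \<Longrightarrow> b \<le> a \<Longrightarrow> P b z x"
  shows "\<forall>\<rho>>0. \<forall>M. \<exists>z\<in>ball y \<rho> \<inter> BB G. \<exists>x\<in>Arg G z. P M z x"
proof (intro allI impI)
  fix \<rho> :: real and M :: real assume r: "\<rho> > 0"
  obtain N where N: "inverse (real (Suc N)) < \<rho>" using reals_Archimedean[OF r] by blast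
  define m where "m = nat \<lceil>M\<rceil> + N"
  obtain k where k: "k \<ge> m" "\<exists>z\<in>ball y (1/real (Suc k)) \<inter> BB G. \<exists>x\<in>Arg G z. P (real k) z x"
    using inf unfolding infinite_nat_iff_unbounded_le by blast
  then obtain z x where zx: "z \<in> ball y (1/real (Suc k)) \<inter> BB G" "x \<in> Arg G z" "P (real k) z x" by blast
  have "1/real (Suc k) \<le> 1/real (Suc N)" using k(1) by (intro divide_left_mono) (auto simp: m_def)
  then have "z \<in> ball y \<rho> \<inter> BB G" using zx(1) N by (auto simp: inverse_eq_divide)
  moreover have "M \<le> real k" using k(1) unfolding m_def by linarith
  ultimately show "\<exists>z\<in>ball y \<rho> \<inter> BB G. \<exists>x\<in>Arg G z. P M z x" using zx mono by blast
qed

context mmset begin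

lemma Esc_cases:
  assumes "\<not> NoEsc G y"
  shows "EscA G y \<or> EscB G y \<or> EscC G y \<or> EscD G y"
proof -
  define PA where "PA k \<longleftrightarrow> (\<exists>z\<in>ball y (1/real (Suc k)) \<inter> BB G. \<exists>x\<in>Arg G z. fst x > real k \<and> snd x \<le> snd z)" for k
  define PB where "PB k \<longleftrightarrow> (\<exists>z\<in>ball y (1/real (Suc k)) \<inter> BB G. \<exists>x\<in>Arg G z. fst x < - real k \<and> snd z \<le> snd x)" for k
  define PC where "PC k \<longleftrightarrow> (\<exists>z\<in>ball y (1/real (Suc k)) \<inter> BB G. \<exists>x\<in>Arg G z. snd x > real k \<and> fst x \<le> fst z)" for k
  define PD where "PD k \<longleftrightarrow> (\<exists>z\<in>ball y (1/real (Suc k)) \<inter> BB G. \<exists>x\<in>Arg G z. snd x < - real k \<and> fst z \<le> fst x)" for k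
  have all: "PA k \<or> PB k \<or> PC k \<or> PD k" for k
  proof -
    define R where "R = 2 * (real k + norm y + 1)"
    have "1/real (Suc k) > 0" by simp
    then obtain z x where z: "z \<in> ball y (1/real (Suc k)) \<inter> BB G" and x: "x \<in> Arg G z" and nx: "norm x > R"
      using assms unfolding NoEsc_def by (meson not_le)
    have "1/real (Suc k) \<le> 1" by simp
    moreover have "dist y z < 1/real (Suc k)" using z by auto
    ultimately have dz: "dist y z < 1" by linarith
    have "norm z \<le> norm y + dist y z" by (metis dist_norm norm_minus_commute norm_triangle_sub)
    then have nz: "norm z \<le> norm y + 1" using dz by linarith
    have fz: "\<bar>fst z\<bar> \<le> norm y + 1" "\<bar>snd z\<bar> \<le> norm y + 1"
      using abs_fst_le_norm[of z] abs_snd_le_norm[of z] nz by linarith+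
    have c: "(fst x - fst z) * (snd x - snd z) \<le> 0" using Arg_le0[OF x] by (simp add: cost_def)
    have "\<bar>fst x\<bar> + \<bar>snd x\<bar> > R" using norm_le_abs[of x] nx by linarith
    then consider "fst x > R/2" | "fst x < -R/2" | "snd x > R/2" | "snd x < -R/2" by linarith
    then show ?thesis
    proof cases
      case 1
      then have "fst x - fst z > 0" "fst x > real k" using fz by (auto simp: R_def)
      then have "snd x \<le> snd z" using c by (simp add: mult_le_0_iff)
      then show ?thesis using z x \<open>fst x > real k\<close> unfolding PA_def by blast
    next
      case 2
      then have "fst x - fst z < 0" "fst x < - real k" using fz by (auto simp: R_def)
      then have "snd z \<le> snd x" using c by (simp add: mult_le_0_iff)
      then show ?thesis using z x \<open>fst x < - real k\<close> unfolding PB_def by blast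
    next
      case 3
      then have "snd x - snd z > 0" "snd x > real k" using fz by (auto simp: R_def)
      then have "fst x \<le> fst z" using c by (simp add: mult_le_0_iff)
      then show ?thesis using z x \<open>snd x > real k\<close> unfolding PC_def by blast
    next
      case 4
      then have "snd x - snd z < 0" "snd x < - real k" using fz by (auto simp: R_def)
      then have "fst z \<le> fst x" using c by (simp add: mult_le_0_iff)
      then show ?thesis using z x \<open>snd x < - real k\<close> unfolding PD_def by blast
    qed
  qed
  have "UNIV = {k. PA k} \<union> {k. PB k} \<union> {k. PC k} \<union> {k. PD k}" using all by auto
  then have "infinite {k. PA k} \<or> infinite {k. PB k} \<or> infinite {k. PC k} \<or> infinite {k. PD k}"
    by (metis finite_Un infinite_UNIV_nat)
  moreover have "infinite {k. PA k} \<Longrightarrow> EscA G y"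
    unfolding EscA_def by (rule inf_esc[where P="\<lambda>a z x. fst x > a \<and> snd x \<le> snd z"]) (auto simp: PA_def)
  moreover have "infinite {k. PB k} \<Longrightarrow> EscB G y"
    unfolding EscB_def by (rule inf_esc[where P="\<lambda>a z x. fst x < - a \<and> snd z \<le> snd x"]) (auto simp: PB_def)
  moreover have "infinite {k. PC k} \<Longrightarrow> EscC G y"
    unfolding EscC_def by (rule inf_esc[where P="\<lambda>a z x. snd x > a \<and> fst x \<le> fst z"]) (auto simp: PC_def)
  moreover have "infinite {k. PD k} \<Longrightarrow> EscD G y"
    unfolding EscD_def by (rule inf_esc[where P="\<lambda>a z x. snd x < - a \<and> fst z \<le> fst x"]) (auto simp: PD_def)
  ultimately show ?thesis by blast
qed

lemma comp_gt: "x \<in> G \<Longrightarrow> w \<in> G \<Longrightarrow> fst x > fst w \<Longrightarrow> snd w \<le> snd x"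
  using comparable[of x w] by auto

lemma EscA_top1: assumes "EscA G y" "w \<in> G" shows "snd w \<le> snd y"
proof (rule ccontr)
  assume "\<not> ?thesis"
  then have r: "snd w - snd y > 0" by simp
  obtain z x where zx: "z \<in> ball y (snd w - snd y) \<inter> BB G" "x \<in> Arg G z" "fst x > fst w" "snd x \<le> snd z"
    using assms(1) r unfolding EscA_def by blast
  have "snd w \<le> snd x" using comp_gt[OF Arg_memD(1)[OF zx(2)] assms(2) zx(3)] .
  moreover have "snd z < snd y + (snd w - snd y)" using zx(1) snd_le_dist[of y z] by auto
  ultimately show False using zx(4) by linarith
qed

lemma EscA_top: assumes "EscA G y" "w \<in> G" shows "snd w < snd y"
proof -
  obtain z x where zx: "z \<in> ball y 1 \<inter> BB G" "x \<in> Arg G z" "fst x > fst w" "snd x \<le> snd z"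
    using assms(1) unfolding EscA_def by (meson zero_less_one)
  have "snd w \<le> snd x" using comp_gt[OF Arg_memD(1)[OF zx(2)] assms(2) zx(3)] .
  moreover obtain w' where "w' \<in> G" "snd z < snd w'" using zx(1) by (auto simp: BB_def)
  moreover have "snd w' \<le> snd y" using EscA_top1[OF assms(1) \<open>w' \<in> G\<close>] .
  ultimately show ?thesis using zx(4) by linarith
qed

lemma EscA_le:
  assumes E: "EscA G y" and H: "snd y' = snd y" and x0: "x0 \<in> Arg G y" and x0': "x0' \<in> Arg G y'"
  shows "cost x0' y' \<le> cost x0 y"
proof (rule field_le_epsilon)
  fix e :: real assume e: "e > 0"
  define D where "D = \<bar>fst y' - fst y\<bar> + 1"
  have D: "D > 0" by (simp add: D_def add_nonneg_pos)
  define \<eta> where "\<eta> = e / (2 * D)"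
  have \<eta>: "\<eta> > 0" using e D by (simp add: \<eta>_def)
  have Deta: "D * \<eta> = e/2" using D by (simp add: \<eta>_def)
  have ydom: "y \<in> dom_phi G" using x0 by (intro dom_Arg_dom_phi) (auto simp: dom_Arg_def)
  obtain w where w: "w \<in> G" "snd w > snd y - \<eta>" using dom_sup2[OF ydom \<eta>] by blast
  have "continuous (at y) (\<lambda>z. cost x0 z)"
    using has_derivative_continuous[OF cost_has_derivative] .
  then obtain \<rho>1 where r1: "\<rho>1 > 0" "\<forall>z. dist z y < \<rho>1 \<longrightarrow> dist (cost x0 z) (cost x0 y) < e/2"
    unfolding continuous_at_eps_delta using e by (meson half_gt_zero)
  define \<rho> where "\<rho> = min 1 \<rho>1"
  have \<rho>: "\<rho> > 0" using r1 by (simp add: \<rho>_def)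
  obtain z x where zx: "z \<in> ball y \<rho> \<inter> BB G" "x \<in> Arg G z" "fst x > max (fst w) (fst y + 1)" "snd x \<le> snd z"
    using E \<rho> unfolding EscA_def by blast
  have xG: "x \<in> G" using Arg_memD(1)[OF zx(2)] .
  have dz: "dist y z < 1" "dist z y < \<rho>1" using zx(1) by (auto simp: \<rho>_def dist_commute)
  have fz: "\<bar>fst z - fst y\<bar> < 1" using fst_le_dist[of z y] dz by (simp add: dist_commute)
  have xw: "snd w \<le> snd x" using comp_gt[OF xG w(1)] zx(3) by simp
  obtain w' where w': "w' \<in> G" "snd z < snd w'" using zx(1) by (auto simp: BB_def)
  have zH: "snd z < snd y" using EscA_top[OF E w'(1)] w'(2) by linarith
  have xpos: "fst x - fst z > 0" using zx(3) fz by linarith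
  have c1: "cost x z \<ge> (fst x - fst z) * (snd x - snd y)"
    unfolding cost_def using xpos zH by (intro mult_left_mono) auto
  have c2: "cost x y' = (fst x - fst z) * (snd x - snd y) + (fst z - fst y') * (snd x - snd y)"
    unfolding cost_def using H by (simp add: algebra_simps)
  have c3: "(fst z - fst y') * (snd x - snd y) \<le> e/2"
  proof -
    have a1: "\<bar>fst z - fst y'\<bar> \<le> D" using fz unfolding D_def by linarith
    have a2: "\<bar>snd x - snd y\<bar> \<le> \<eta>" using w(2) xw zx(4) zH by linarith
    have "\<bar>(fst z - fst y') * (snd x - snd y)\<bar> \<le> D * \<eta>"
      unfolding abs_mult using a1 a2 D by (intro mult_mono) auto
    then show ?thesis using Deta by linarith
  qed
  have c4: "cost x z \<le> cost x0 z" using Arg_memD(2)[OF zx(2) Arg_memD(1)[OF x0]] .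
  have "dist (cost x0 z) (cost x0 y) < e/2" using r1(2) dz(2) by blast
  then have "\<bar>cost x0 z - cost x0 y\<bar> < e/2" by (simp only: dist_real_def)
  then have c5: "cost x0 z < cost x0 y + e/2" by linarith
  have c6: "cost x0' y' \<le> cost x y'" using Arg_memD(2)[OF x0' xG] .
  show "cost x0' y' \<le> cost x0 y + e" using c1 c2 c3 c4 c5 c6 by linarith
qed

lemma EscA_unique:
  assumes y: "y \<in> dom_Arg G" "EscA G y" and y': "y' \<in> dom_Arg G" "EscA G y'"
  shows "y = y'"
proof -
  obtain x0 where x0: "x0 \<in> Arg G y" using y(1) by (auto simp: dom_Arg_def)
  obtain x0' where x0': "x0' \<in> Arg G y'" using y'(1) by (auto simp: dom_Arg_def)
  have H: "snd y' = snd y"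
    using top_same[OF dom_Arg_dom_phi[OF y(1)] dom_Arg_dom_phi[OF y'(1)]] EscA_top1[OF y(2)] EscA_top1[OF y'(2)]
    by metis
  have le1: "cost x0' y' \<le> cost x0 y" by (rule EscA_le[OF y(2) H x0 x0'])
  have le2: "cost x0 y \<le> cost x0' y'" by (rule EscA_le[OF y'(2) H[symmetric] x0' x0])
  have "fst y = fst y'"
  proof (rule ccontr)
    assume "fst y \<noteq> fst y'"
    then consider "fst y < fst y'" | "fst y' < fst y" by linarith
    then show False
    proof cases
      case 1
      have s: "snd x0' < snd y" using EscA_top[OF y'(2) Arg_memD(1)[OF x0']] H by simp
      have "cost x0' y - cost x0' y' = (fst y' - fst y) * (snd x0' - snd y)"
        unfolding cost_def using H by (simp add: algebra_simps)
      moreover have "(fst y' - fst y) * (snd x0' - snd y) < 0" using 1 s by (simp add: mult_pos_neg)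
      moreover have "cost x0 y \<le> cost x0' y" using Arg_memD(2)[OF x0 Arg_memD(1)[OF x0']] .
      ultimately show False using le1 by linarith
    next
      case 2
      have s: "snd x0 < snd y" using EscA_top[OF y(2) Arg_memD(1)[OF x0]] by simp
      have "cost x0 y' - cost x0 y = (fst y - fst y') * (snd x0 - snd y)"
        unfolding cost_def using H by (simp add: algebra_simps)
      moreover have "(fst y - fst y') * (snd x0 - snd y) < 0" using 2 s by (simp add: mult_pos_neg)
      moreover have "cost x0' y' \<le> cost x0 y'" using Arg_memD(2)[OF x0' Arg_memD(1)[OF x0]] .
      ultimately show False using le2 by linarith
    qed
  qed
  then show ?thesis using H by (simp add: prod_eq_iff)
qed

end

definition sw :: "pt \<Rightarrow> pt" where "sw p = (snd p, fst p)"
definition ng :: "pt \<Rightarrow> pt" where "ng p = (- fst p, - snd p)"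

lemma sw_sw[simp]: "sw (sw p) = p" by (simp add: sw_def)
lemma ng_ng[simp]: "ng (ng p) = p" by (simp add: ng_def)
lemma cost_sw[simp]: "cost (sw a) (sw b) = cost a b" by (simp add: sw_def cost_def)
lemma cost_ng[simp]: "cost (ng a) (ng b) = cost a b" by (simp add: ng_def cost_def algebra_simps)
lemma dist_sw[simp]: "dist (sw a) (sw b) = dist a b"
  by (simp add: sw_def dist_prod_def add.commute)
lemma dist_ng[simp]: "dist (ng a) (ng b) = dist a b"
proof -
  have "dist (ng a) (ng b) = sqrt ((dist (- fst a) (- fst b))\<^sup>2 + (dist (- snd a) (- snd b))\<^sup>2)"
    by (simp add: ng_def dist_prod_def)
  also have "\<dots> = dist a b" by (simp add: dist_prod_def dist_real_def abs_minus_commute)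
  finally show ?thesis .
qed

locale invol =
  fixes f :: "pt \<Rightarrow> pt"
  assumes ff: "\<And>p. f (f p) = p" and cf: "\<And>a b. cost (f a) (f b) = cost a b"
    and df: "\<And>a b. dist (f a) (f b) = dist a b"
begin

lemma inj_f: "inj f" by (metis ff injI)

lemma mem_img: "f x \<in> f ` S \<longleftrightarrow> x \<in> S" using inj_f by (auto dest: injD)

lemma mm_img: assumes "maximal_monotone G" shows "maximal_monotone (f ` G)"
proof -
  have m: "monotone_set G" and mx: "\<not> (\<exists>H. monotone_set H \<and> G \<subset> H)" using assms by (auto simp: maximal_monotone_def)
  have m': "monotone_set (f ` G)" using m by (auto simp: monotone_set_def cf)
  have "\<not> (\<exists>H. monotone_set H \<and> f ` G \<subset> H)"
  proof
    assume "\<exists>H. monotone_set H \<and> f ` G \<subset> H"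
    then obtain H where H: "monotone_set H" "f ` G \<subset> H" by blast
    have "monotone_set (f ` H)" using H(1) by (auto simp: monotone_set_def cf)
    moreover have "G \<subset> f ` H"
    proof -
      have "f ` f ` G \<subset> f ` H" using H(2) inj_f by (simp add: psubset_eq inj_image_subset_iff inj_image_eq_iff)
      moreover have "f ` f ` G = G" by (auto simp: image_image ff)
      ultimately show ?thesis by simp
    qed
    ultimately show False using mx by blast
  qed
  with m' show ?thesis by (simp add: maximal_monotone_def)
qed

lemma Arg_img: "Arg (f ` G) (f y) = f ` Arg G y"
proof -
  have "x \<in> Arg (f ` G) (f y) \<longleftrightarrow> x \<in> f ` Arg G y" for x
  proof -
    obtain x0 where x0: "x = f x0" using ff by metis
    show ?thesis unfolding x0 mem_img Arg_char by (auto simp: cf mem_img)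
  qed
  then show ?thesis by blast
qed

lemma dom_Arg_img: "f y \<in> dom_Arg (f ` G) \<longleftrightarrow> y \<in> dom_Arg G"
  by (simp add: dom_Arg_def Arg_img)

lemma ball_img: "f z \<in> ball (f y) r \<longleftrightarrow> z \<in> ball y r"
  by (simp add: df)

end

interpretation sw: invol sw by unfold_locales auto
interpretation ng: invol ng by unfold_locales auto

lemma BB_sw: "sw y \<in> BB (sw ` G) \<longleftrightarrow> y \<in> BB G"
  unfolding BB_def sw_def by auto

lemma BB_ng: "ng y \<in> BB (ng ` G) \<longleftrightarrow> y \<in> BB G"
  unfolding BB_def ng_def by auto

lemma EscB_ng: assumes "EscB G y" shows "EscA (ng ` G) (ng y)"
  unfolding EscA_def
proof (intro allI impI)
  fix \<rho> :: real and M :: real assume r: "\<rho> > 0"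
  obtain z x where zx: "z \<in> ball y \<rho> \<inter> BB G" "x \<in> Arg G z" "fst x < - M" "snd z \<le> snd x"
    using assms r unfolding EscB_def by blast
  have "ng z \<in> ball (ng y) \<rho> \<inter> BB (ng ` G)" using zx(1) by (simp add: ng.ball_img BB_ng)
  moreover have "ng x \<in> Arg (ng ` G) (ng z)" using zx(2) by (simp add: ng.Arg_img)
  moreover have "fst (ng x) > M \<and> snd (ng x) \<le> snd (ng z)" using zx(3,4) by (simp add: ng_def)
  ultimately show "\<exists>z\<in>ball (ng y) \<rho> \<inter> BB (ng ` G). \<exists>x\<in>Arg (ng ` G) z. M < fst x \<and> snd x \<le> snd z" by blast
qed

lemma EscC_sw: assumes "EscC G y" shows "EscA (sw ` G) (sw y)"
  unfolding EscA_def
proof (intro allI impI)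
  fix \<rho> :: real and M :: real assume r: "\<rho> > 0"
  obtain z x where zx: "z \<in> ball y \<rho> \<inter> BB G" "x \<in> Arg G z" "snd x > M" "fst x \<le> fst z"
    using assms r unfolding EscC_def by blast
  have "sw z \<in> ball (sw y) \<rho> \<inter> BB (sw ` G)" using zx(1) by (simp add: sw.ball_img BB_sw)
  moreover have "sw x \<in> Arg (sw ` G) (sw z)" using zx(2) by (simp add: sw.Arg_img)
  moreover have "fst (sw x) > M \<and> snd (sw x) \<le> snd (sw z)" using zx(3,4) by (simp add: sw_def)
  ultimately show "\<exists>z\<in>ball (sw y) \<rho> \<inter> BB (sw ` G). \<exists>x\<in>Arg (sw ` G) z. M < fst x \<and> snd x \<le> snd z" by blast
qed

lemma EscD_ng: assumes "EscD G y" shows "EscC (ng ` G) (ng y)"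
  unfolding EscC_def
proof (intro allI impI)
  fix \<rho> :: real and M :: real assume r: "\<rho> > 0"
  obtain z x where zx: "z \<in> ball y \<rho> \<inter> BB G" "x \<in> Arg G z" "snd x < - M" "fst z \<le> fst x"
    using assms r unfolding EscD_def by blast
  have "ng z \<in> ball (ng y) \<rho> \<inter> BB (ng ` G)" using zx(1) by (simp add: ng.ball_img BB_ng)
  moreover have "ng x \<in> Arg (ng ` G) (ng z)" using zx(2) by (simp add: ng.Arg_img)
  moreover have "snd (ng x) > M \<and> fst (ng x) \<le> fst (ng z)" using zx(3,4) by (simp add: ng_def)
  ultimately show "\<exists>z\<in>ball (ng y) \<rho> \<inter> BB (ng ` G). \<exists>x\<in>Arg (ng ` G) z. M < snd x \<and> fst x \<le> fst z" by blast
qed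

lemma EscA_count: assumes "maximal_monotone G" shows "countable {y \<in> dom_Arg G. EscA G y}"
proof -
  interpret mmset G using assms by unfold_locales
  have "finite {y \<in> dom_Arg G. EscA G y}"
  proof (cases "{y \<in> dom_Arg G. EscA G y} = {}")
    case True then show ?thesis by (simp only: finite.emptyI)
  next
    case False
    then obtain y0 where y0: "y0 \<in> dom_Arg G" "EscA G y0" by blast
    have "{y \<in> dom_Arg G. EscA G y} \<subseteq> {y0}" using EscA_unique y0 by blast
    then show ?thesis using finite_subset by blast
  qed
  then show ?thesis by (rule countable_finite)
qed

lemma EscB_count: assumes "maximal_monotone G" shows "countable {y \<in> dom_Arg G. EscB G y}"
proof -
  have "{y \<in> dom_Arg G. EscB G y} \<subseteq> ng ` {y \<in> dom_Arg (ng ` G). EscA (ng ` G) y}"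
  proof
    fix y assume "y \<in> {y \<in> dom_Arg G. EscB G y}"
    then have "ng y \<in> {y \<in> dom_Arg (ng ` G). EscA (ng ` G) y}" by (simp add: ng.dom_Arg_img EscB_ng)
    then show "y \<in> ng ` {y \<in> dom_Arg (ng ` G). EscA (ng ` G) y}" by (metis image_eqI ng_ng)
  qed
  moreover have "countable {y \<in> dom_Arg (ng ` G). EscA (ng ` G) y}"
    by (rule EscA_count[OF ng.mm_img[OF assms]])
  ultimately show ?thesis by (meson countable_image countable_subset)
qed

lemma EscC_count: assumes "maximal_monotone G" shows "countable {y \<in> dom_Arg G. EscC G y}"
proof -
  have "{y \<in> dom_Arg G. EscC G y} \<subseteq> sw ` {y \<in> dom_Arg (sw ` G). EscA (sw ` G) y}"
  proof
    fix y assume "y \<in> {y \<in> dom_Arg G. EscC G y}"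
    then have "sw y \<in> {y \<in> dom_Arg (sw ` G). EscA (sw ` G) y}" by (simp add: sw.dom_Arg_img EscC_sw)
    then show "y \<in> sw ` {y \<in> dom_Arg (sw ` G). EscA (sw ` G) y}" by (metis image_eqI sw_sw)
  qed
  moreover have "countable {y \<in> dom_Arg (sw ` G). EscA (sw ` G) y}"
    by (rule EscA_count[OF sw.mm_img[OF assms]])
  ultimately show ?thesis by (meson countable_image countable_subset)
qed

lemma EscD_count: assumes "maximal_monotone G" shows "countable {y \<in> dom_Arg G. EscD G y}"
proof -
  have "{y \<in> dom_Arg G. EscD G y} \<subseteq> ng ` {y \<in> dom_Arg (ng ` G). EscC (ng ` G) y}"
  proof
    fix y assume "y \<in> {y \<in> dom_Arg G. EscD G y}"
    then have "ng y \<in> {y \<in> dom_Arg (ng ` G). EscC (ng ` G) y}" by (simp add: ng.dom_Arg_img EscD_ng)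
    then show "y \<in> ng ` {y \<in> dom_Arg (ng ` G). EscC (ng ` G) y}" by (metis image_eqI ng_ng)
  qed
  moreover have "countable {y \<in> dom_Arg (ng ` G). EscC (ng ` G) y}"
    by (rule EscC_count[OF ng.mm_img[OF assms]])
  ultimately show ?thesis by (meson countable_image countable_subset)
qed

lemma EscSet_count: assumes "maximal_monotone G" shows "countable {y \<in> dom_Arg G. \<not> NoEsc G y}"
proof -
  interpret mmset G using assms by unfold_locales
  have "{y \<in> dom_Arg G. \<not> NoEsc G y} \<subseteq> {y \<in> dom_Arg G. EscA G y} \<union> {y \<in> dom_Arg G. EscB G y} \<union>
     {y \<in> dom_Arg G. EscC G y} \<union> {y \<in> dom_Arg G. EscD G y}" using Esc_cases by blast
  then show ?thesis using EscA_count[OF assms] EscB_count[OF assms] EscC_count[OF assms] EscD_count[OF assms]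
    by (meson countable_Un countable_subset)
qed


lemma sort3:
  fixes u v w :: pt
  assumes "u \<in> S" "v \<in> S" "w \<in> S"
    and "(fst u < fst v \<and> snd u < snd v) \<or> (fst v < fst u \<and> snd v < snd u)"
    and "(fst v < fst w \<and> snd v < snd w) \<or> (fst w < fst v \<and> snd w < snd v)"
    and "(fst u < fst w \<and> snd u < snd w) \<or> (fst w < fst u \<and> snd w < snd u)"
  shows "\<exists>L M U. L \<in> S \<and> M \<in> S \<and> U \<in> S \<and> fst L < fst M \<and> fst M < fst U \<and> snd L < snd M \<and> snd M < snd U"
  using assms(4-6)
proof (elim disjE conjE)
qed (use assms(1-3) in \<open>blast | linarith\<close>)+

definition pp :: "pt \<Rightarrow> pt" where "pp x = (- snd x, - fst x)"

definition det2 :: "pt \<Rightarrow> pt \<Rightarrow> real" where "det2 a b = fst a * snd b - snd a * fst b"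

lemma det2_add1[simp]: "det2 (x + y) z = det2 x z + det2 y z" by (simp add: det2_def algebra_simps)
lemma det2_add2[simp]: "det2 z (x + y) = det2 z x + det2 z y" by (simp add: det2_def algebra_simps)
lemma det2_scale1[simp]: "det2 (c *\<^sub>R x) z = c * det2 x z" by (simp add: det2_def algebra_simps)
lemma det2_scale2[simp]: "det2 z (c *\<^sub>R x) = c * det2 z x" by (simp add: det2_def algebra_simps)
lemma det2_self[simp]: "det2 x x = 0" by (simp add: det2_def)

lemma cramer:
  assumes "det2 a b \<noteq> 0"
  shows "v = (det2 v b / det2 a b) *\<^sub>R a + (det2 a v / det2 a b) *\<^sub>R b"
proof -
  have "det2 a b *\<^sub>R v = det2 v b *\<^sub>R a + det2 a v *\<^sub>R b"
    by (simp add: det2_def prod_eq_iff algebra_simps)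
  moreover have "v = (1 / det2 a b) *\<^sub>R (det2 a b *\<^sub>R v)" using assms by simp
  ultimately have "v = (1 / det2 a b) *\<^sub>R (det2 v b *\<^sub>R a + det2 a v *\<^sub>R b)" by simp
  then show ?thesis by (simp add: scaleR_add_right)
qed

definition OT :: "pt \<Rightarrow> pt \<Rightarrow> pt \<Rightarrow> pt set" where
  "OT P1 P2 P3 = {q. 0 < det2 (q - P1) (P3 - P1) / det2 (P2 - P1) (P3 - P1) \<and>
                     0 < det2 (P2 - P1) (q - P1) / det2 (P2 - P1) (P3 - P1) \<and>
                     det2 (q - P1) (P3 - P1) / det2 (P2 - P1) (P3 - P1) + det2 (P2 - P1) (q - P1) / det2 (P2 - P1) (P3 - P1) < 1}"

lemma cont_det1: "continuous_on UNIV (\<lambda>q. det2 (q - P) c / k)"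
proof -
  have "continuous_on UNIV (\<lambda>q. (fst (q - P) * snd c - snd (q - P) * fst c) * inverse k)"
    by (intro continuous_on_mult_right continuous_on_diff continuous_on_mult_right continuous_on_fst continuous_on_snd continuous_on_id continuous_on_const)
  then show ?thesis by (simp add: det2_def divide_inverse)
qed

lemma cont_det2: "continuous_on UNIV (\<lambda>q. det2 c (q - P) / k)"
proof -
  have "continuous_on UNIV (\<lambda>q. (fst c * snd (q - P) - snd c * fst (q - P)) * inverse k)"
    by (intro continuous_on_mult_right continuous_on_diff continuous_on_mult_left continuous_on_fst continuous_on_snd continuous_on_id continuous_on_const)
  then show ?thesis by (simp add: det2_def divide_inverse)
qed

lemma open_OT: "open (OT P1 P2 P3)"
  unfolding OT_def
  by (intro open_Collect_conj open_Collect_less cont_det1 cont_det2 continuous_on_add continuous_on_const)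

lemma OT_ne: assumes "det2 (P2 - P1) (P3 - P1) \<noteq> 0" shows "P1 + (1/3) *\<^sub>R (P2 - P1) + (1/3) *\<^sub>R (P3 - P1) \<in> OT P1 P2 P3"
proof -
  define D where "D = det2 (P2 - P1) (P3 - P1)"
  have "det2 ((1/3) *\<^sub>R (P2 - P1) + (1/3) *\<^sub>R (P3 - P1)) (P3 - P1) = D/3"
    "det2 (P2 - P1) ((1/3) *\<^sub>R (P2 - P1) + (1/3) *\<^sub>R (P3 - P1)) = D/3"
    by (simp_all add: D_def)
  then show ?thesis using assms unfolding OT_def D_def[symmetric] by simp
qed

lemma OT_comb:
  assumes "det2 (P2 - P1) (P3 - P1) \<noteq> 0" "q \<in> OT P1 P2 P3"
  shows "\<exists>s t. s > 0 \<and> t > 0 \<and> s + t < 1 \<and> q = (1 - s - t) *\<^sub>R P1 + s *\<^sub>R P2 + t *\<^sub>R P3"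
proof -
  define s where "s = det2 (q - P1) (P3 - P1) / det2 (P2 - P1) (P3 - P1)"
  define t where "t = det2 (P2 - P1) (q - P1) / det2 (P2 - P1) (P3 - P1)"
  have "q - P1 = s *\<^sub>R (P2 - P1) + t *\<^sub>R (P3 - P1)"
    unfolding s_def t_def by (rule cramer[OF assms(1)])
  then have "q = P1 + (s *\<^sub>R (P2 - P1) + t *\<^sub>R (P3 - P1))" by (metis add_diff_cancel_left' diff_add_cancel add.commute)
  then have "q = (1 - s - t) *\<^sub>R P1 + s *\<^sub>R P2 + t *\<^sub>R P3"
    by (simp add: algebra_simps scaleR_diff_left scaleR_diff_right)
  moreover have "s > 0" "t > 0" "s + t < 1" using assms(2) by (auto simp: OT_def s_def t_def)
  ultimately show ?thesis by blast
qed

context mmset begin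

lemma pp_mono:
  assumes "x \<in> Arg G y" "x' \<in> Arg G y'"
  shows "(pp x - pp x') \<bullet> (y - y') \<le> 0"
proof -
  have "(fst x' - fst x) * (snd y' - snd y) + (snd x' - snd x) * (fst y' - fst y) \<ge> 0"
    using mono_ineq[OF assms Arg_memD(1)[OF assms(1)] Arg_memD(1)[OF assms(2)]] .
  moreover have "(pp x - pp x') \<bullet> (y - y') = - ((fst x' - fst x) * (snd y' - snd y) + (snd x' - snd x) * (fst y' - fst y))"
    by (simp add: pp_def inner_prod_def algebra_simps)
  ultimately show ?thesis by linarith
qed

lemma comb_mono:
  assumes x: "x1 \<in> Arg G y" "x2 \<in> Arg G y" "x3 \<in> Arg G y"
    and x': "x1' \<in> Arg G y'" "x2' \<in> Arg G y'" "x3' \<in> Arg G y'"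
    and a: "a1 \<ge> 0" "a2 \<ge> 0" "a3 \<ge> 0" "a1 + a2 + a3 = 1"
    and b: "b1 \<ge> 0" "b2 \<ge> 0" "b3 \<ge> 0" "b1 + b2 + b3 = 1"
  shows "((a1 *\<^sub>R pp x1 + a2 *\<^sub>R pp x2 + a3 *\<^sub>R pp x3) - (b1 *\<^sub>R pp x1' + b2 *\<^sub>R pp x2' + b3 *\<^sub>R pp x3')) \<bullet> (y - y') \<le> 0"
proof -
  define d where "d = y - y'"
  define m1 where "m1 = pp x1 \<bullet> d" define m2 where "m2 = pp x2 \<bullet> d" define m3 where "m3 = pp x3 \<bullet> d"
  define n1 where "n1 = pp x1' \<bullet> d" define n2 where "n2 = pp x2' \<bullet> d" define n3 where "n3 = pp x3' \<bullet> d"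
  define \<mu> where "\<mu> = min n1 (min n2 n3)"
  have le: "pp u \<bullet> d \<le> pp v \<bullet> d" if "u \<in> Arg G y" "v \<in> Arg G y'" for u v
    using pp_mono[OF that] by (simp add: d_def inner_diff_left)
  have mm: "m1 \<le> \<mu>" "m2 \<le> \<mu>" "m3 \<le> \<mu>"
    unfolding m1_def m2_def m3_def \<mu>_def n1_def n2_def n3_def
    using le[OF x(1) x'(1)] le[OF x(1) x'(2)] le[OF x(1) x'(3)]
      le[OF x(2) x'(1)] le[OF x(2) x'(2)] le[OF x(2) x'(3)]
      le[OF x(3) x'(1)] le[OF x(3) x'(2)] le[OF x(3) x'(3)] by simp_all
  have nn: "\<mu> \<le> n1" "\<mu> \<le> n2" "\<mu> \<le> n3" by (auto simp: \<mu>_def)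
  have "a1 * m1 \<le> a1 * \<mu>" "a2 * m2 \<le> a2 * \<mu>" "a3 * m3 \<le> a3 * \<mu>"
    using mm a by (auto intro: mult_left_mono)
  moreover have "b1 * \<mu> \<le> b1 * n1" "b2 * \<mu> \<le> b2 * n2" "b3 * \<mu> \<le> b3 * n3"
    using nn b by (auto intro: mult_left_mono)
  moreover have "a1 * \<mu> + a2 * \<mu> + a3 * \<mu> = \<mu>" "b1 * \<mu> + b2 * \<mu> + b3 * \<mu> = \<mu>"
    using a(4) b(4) by (simp_all add: ring_distribs(2)[symmetric])
  moreover have "((a1 *\<^sub>R pp x1 + a2 *\<^sub>R pp x2 + a3 *\<^sub>R pp x3) - (b1 *\<^sub>R pp x1' + b2 *\<^sub>R pp x2' + b3 *\<^sub>R pp x3')) \<bullet> d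
      = (a1 * m1 + a2 * m2 + a3 * m3) - (b1 * n1 + b2 * n2 + b3 * n3)"
    by (simp add: m1_def m2_def m3_def n1_def n2_def n3_def inner_diff_left inner_add_left)
  ultimately show ?thesis unfolding d_def by linarith
qed

lemma noncollinear:
  assumes A: "L \<in> Arg G y" "M \<in> Arg G y" "U \<in> Arg G y"
    and o: "fst L < fst M" "fst M < fst U" "snd L < snd M" "snd M < snd U"
  shows "det2 (pp M - pp L) (pp U - pp L) \<noteq> 0"
proof
  assume D0: "det2 (pp M - pp L) (pp U - pp L) = 0"
  have eqLM: "cost L y = cost M y" "cost L y = cost U y"
    using Arg_memD(2)[OF A(1) Arg_memD(1)[OF A(2)]] Arg_memD(2)[OF A(2) Arg_memD(1)[OF A(1)]]
      Arg_memD(2)[OF A(1) Arg_memD(1)[OF A(3)]] Arg_memD(2)[OF A(3) Arg_memD(1)[OF A(1)]] by linarith+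
  define d1 where "d1 = fst U - fst L"
  define d2 where "d2 = snd U - snd L"
  define s where "s = (fst M - fst L) / d1"
  have d1p: "d1 > 0" "d2 > 0" using o by (auto simp: d1_def d2_def)
  have s01: "s > 0" "s < 1" using o d1p by (auto simp: s_def d1_def field_simps)
  have fM: "fst M = fst L + s * d1" using d1p by (simp add: s_def)
  have "(snd M - snd L) * d1 = (fst M - fst L) * d2"
    using D0 by (simp add: det2_def pp_def d1_def d2_def algebra_simps)
  then have sM: "snd M = snd L + s * d2" using d1p by (simp add: s_def field_simps)
  define a1 where "a1 = fst L - fst y"
  define a2 where "a2 = snd L - snd y"
  have cL: "cost L y = a1 * a2" by (simp add: cost_def a1_def a2_def)
  have cU: "cost U y = (a1 + d1) * (a2 + d2)" by (simp add: cost_def a1_def a2_def d1_def d2_def)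
  have cM: "cost M y = (a1 + s * d1) * (a2 + s * d2)" by (simp add: cost_def a1_def a2_def fM sM algebra_simps)
  have k: "a1 * d2 + a2 * d1 = - (d1 * d2)" using eqLM(2) cL cU by (simp add: algebra_simps)
  have "cost M y - cost L y = s * (a1 * d2 + a2 * d1) + s * s * (d1 * d2)"
    using cL cM by (simp add: algebra_simps)
  also have "\<dots> = - (s * (1 - s) * (d1 * d2))" using k by (simp add: algebra_simps)
  finally have "cost M y - cost L y = - (s * (1 - s) * (d1 * d2))" .
  moreover have "s * (1 - s) * (d1 * d2) > 0" using s01 d1p by simp
  ultimately show False using eqLM(1) by linarith
qed

definition Triple :: "pt set" where
  "Triple = {y. y \<notin> G \<and> (\<exists>u v w. u \<in> Arg G y \<and> v \<in> Arg G y \<and> w \<in> Arg G y \<and> u \<noteq> v \<and> v \<noteq> w \<and> u \<noteq> w)}"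

lemma Triple_LMU:
  assumes "y \<in> Triple"
  shows "\<exists>L M U. L \<in> Arg G y \<and> M \<in> Arg G y \<and> U \<in> Arg G y \<and> fst L < fst M \<and> fst M < fst U \<and> snd L < snd M \<and> snd M < snd U"
proof -
  obtain u v w where uvw: "y \<notin> G" "u \<in> Arg G y" "v \<in> Arg G y" "w \<in> Arg G y" "u \<noteq> v" "v \<noteq> w" "u \<noteq> w"
    using assms unfolding Triple_def by blast
  have o1: "(fst u < fst v \<and> snd u < snd v) \<or> (fst v < fst u \<and> snd v < snd u)" by (rule off_G_order) (use uvw in auto)
  have o2: "(fst v < fst w \<and> snd v < snd w) \<or> (fst w < fst v \<and> snd w < snd v)" by (rule off_G_order) (use uvw in auto)
  have o3: "(fst u < fst w \<and> snd u < snd w) \<or> (fst w < fst u \<and> snd w < snd u)" by (rule off_G_order) (use uvw in auto)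
  show ?thesis by (rule sort3[OF uvw(2-4) o1 o2 o3])
qed

definition LMU :: "pt \<Rightarrow> pt \<times> pt \<times> pt" where
  "LMU y = (SOME t. fst t \<in> Arg G y \<and> fst (snd t) \<in> Arg G y \<and> snd (snd t) \<in> Arg G y \<and>
       fst (fst t) < fst (fst (snd t)) \<and> fst (fst (snd t)) < fst (snd (snd t)) \<and>
       snd (fst t) < snd (fst (snd t)) \<and> snd (fst (snd t)) < snd (snd (snd t)))"

lemma LMU:
  assumes "y \<in> Triple"
  defines "L \<equiv> fst (LMU y)" and "M \<equiv> fst (snd (LMU y))" and "U \<equiv> snd (snd (LMU y))"
  shows "L \<in> Arg G y \<and> M \<in> Arg G y \<and> U \<in> Arg G y \<and> fst L < fst M \<and> fst M < fst U \<and> snd L < snd M \<and> snd M < snd U"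
proof -
  obtain L0 M0 U0 where h: "L0 \<in> Arg G y \<and> M0 \<in> Arg G y \<and> U0 \<in> Arg G y \<and> fst L0 < fst M0 \<and> fst M0 < fst U0 \<and> snd L0 < snd M0 \<and> snd M0 < snd U0"
    using Triple_LMU[OF assms(1)] by blast
  let ?P = "\<lambda>t. fst t \<in> Arg G y \<and> fst (snd t) \<in> Arg G y \<and> snd (snd t) \<in> Arg G y \<and>
       fst (fst t) < fst (fst (snd t)) \<and> fst (fst (snd t)) < fst (snd (snd t)) \<and>
       snd (fst t) < snd (fst (snd t)) \<and> snd (fst (snd t)) < snd (snd (snd t))"
  have "?P (L0, M0, U0)" using h by simp
  then have "?P (LMU y)" unfolding LMU_def by (rule someI)
  then show ?thesis unfolding L_def M_def U_def .
qed

definition OY :: "pt \<Rightarrow> pt set" where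
  "OY y = OT (pp (fst (LMU y))) (pp (fst (snd (LMU y)))) (pp (snd (snd (LMU y))))"

lemma OY_props:
  assumes "y \<in> Triple"
  shows "open (OY y)" "OY y \<noteq> {}"
    "\<And>q. q \<in> OY y \<Longrightarrow> \<exists>x1 x2 x3 a1 a2 a3. x1 \<in> Arg G y \<and> x2 \<in> Arg G y \<and> x3 \<in> Arg G y \<and> a1 \<ge> 0 \<and> a2 \<ge> 0 \<and> a3 \<ge> 0 \<and>
        a1 + a2 + a3 = 1 \<and> q = a1 *\<^sub>R pp x1 + a2 *\<^sub>R pp x2 + a3 *\<^sub>R pp x3"
proof -
  define L where "L = fst (LMU y)"
  define M where "M = fst (snd (LMU y))"
  define U where "U = snd (snd (LMU y))"
  have h: "L \<in> Arg G y \<and> M \<in> Arg G y \<and> U \<in> Arg G y \<and> fst L < fst M \<and> fst M < fst U \<and> snd L < snd M \<and> snd M < snd U"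
    using LMU[OF assms] unfolding L_def M_def U_def .
  have D: "det2 (pp M - pp L) (pp U - pp L) \<noteq> 0" using noncollinear h by blast
  have O: "OY y = OT (pp L) (pp M) (pp U)" by (simp add: OY_def L_def M_def U_def)
  show "open (OY y)" unfolding O by (rule open_OT)
  show "OY y \<noteq> {}" unfolding O using OT_ne[OF D] by blast
  fix q assume "q \<in> OY y"
  then obtain s t where st: "s > 0" "t > 0" "s + t < 1" "q = (1 - s - t) *\<^sub>R pp L + s *\<^sub>R pp M + t *\<^sub>R pp U"
    using OT_comb[OF D] O by blast
  show "\<exists>x1 x2 x3 a1 a2 a3. x1 \<in> Arg G y \<and> x2 \<in> Arg G y \<and> x3 \<in> Arg G y \<and> a1 \<ge> 0 \<and> a2 \<ge> 0 \<and> a3 \<ge> 0 \<and>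
        a1 + a2 + a3 = 1 \<and> q = a1 *\<^sub>R pp x1 + a2 *\<^sub>R pp x2 + a3 *\<^sub>R pp x3"
    by (rule exI[of _ L], rule exI[of _ M], rule exI[of _ U], rule exI[of _ "1 - s - t"], rule exI[of _ s], rule exI[of _ t])
       (use st h in auto)
qed

lemma OY_disj:
  assumes y: "y \<in> Triple" and y': "y' \<in> Triple" and q: "q \<in> OY y" "q \<in> OY y'"
  shows "y = y'"
proof (rule ccontr)
  assume ne: "y \<noteq> y'"
  define d where "d = y - y'"
  have dn: "d \<bullet> d > 0" using ne by (simp add: d_def)
  obtain r where r: "r > 0" "ball q r \<subseteq> OY y" using OY_props(1)[OF y] q(1) open_contains_ball by blast
  define e where "e = r / (2 * (norm d + 1))"
  have e: "e > 0" using r by (simp add: e_def add_nonneg_pos)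
  have "norm (e *\<^sub>R d) < r"
  proof -
    have "norm (e *\<^sub>R d) = e * norm d" using e by simp
    also have "\<dots> < e * (2 * (norm d + 1))"
    proof (rule mult_strict_left_mono)
      show "norm d < 2 * (norm d + 1)" by (smt (verit) norm_ge_zero)
    qed (rule e)
    also have "\<dots> = r"
    proof -
      have "2 * (norm d + 1) > 0" by (simp add: add_nonneg_pos)
      then show ?thesis unfolding e_def by simp
    qed
    finally show ?thesis .
  qed
  then have "q + e *\<^sub>R d \<in> OY y" using r(2) by (auto simp: dist_norm)
  from OY_props(3)[OF y this] obtain x1 x2 x3 a1 a2 a3 where
    A: "x1 \<in> Arg G y" "x2 \<in> Arg G y" "x3 \<in> Arg G y" "a1 \<ge> 0" "a2 \<ge> 0" "a3 \<ge> 0" "a1 + a2 + a3 = 1"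
       "q + e *\<^sub>R d = a1 *\<^sub>R pp x1 + a2 *\<^sub>R pp x2 + a3 *\<^sub>R pp x3" by blast
  from OY_props(3)[OF y' q(2)] obtain x1' x2' x3' b1 b2 b3 where
    B: "x1' \<in> Arg G y'" "x2' \<in> Arg G y'" "x3' \<in> Arg G y'" "b1 \<ge> 0" "b2 \<ge> 0" "b3 \<ge> 0" "b1 + b2 + b3 = 1"
       "q = b1 *\<^sub>R pp x1' + b2 *\<^sub>R pp x2' + b3 *\<^sub>R pp x3'" by blast
  have "((q + e *\<^sub>R d) - q) \<bullet> (y - y') \<le> 0"
    unfolding A(8) by (subst B(8)) (rule comb_mono[OF A(1-3) B(1-3) A(4-7) B(4-7)])
  then have "e * (d \<bullet> d) \<le> 0" by (simp add: d_def)
  moreover have "e * (d \<bullet> d) > 0" using e dn by simp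
  ultimately show False by linarith
qed

lemma Triple_countable: "countable Triple"
proof -
  have "countable (OY ` Triple)"
  proof (rule countable_disjoint_open_subsets)
    show "\<And>S. S \<in> OY ` Triple \<Longrightarrow> open S" using OY_props(1) by blast
    show "pairwise disjnt (OY ` Triple)"
      unfolding pairwise_def disjnt_def using OY_disj by blast
  qed
  moreover have "inj_on OY Triple"
  proof (rule inj_onI)
    fix y y' assume yy: "y \<in> Triple" "y' \<in> Triple" "OY y = OY y'"
    obtain q where "q \<in> OY y" using OY_props(2)[OF yy(1)] by blast
    then show "y = y'" using OY_disj[OF yy(1,2)] yy(3) by simp
  qed
  ultimately show ?thesis using countable_image_inj_on by blast
qed

end

definition Ta :: "pt set \<Rightarrow> pt \<Rightarrow> pt set" where
  "Ta G a = {y. \<exists>u\<in>Arg G y. \<exists>v\<in>Arg G y. fst u < fst a \<and> snd u < snd a \<and> fst a < fst v \<and> snd a < snd v}"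

definition ht :: "pt set \<Rightarrow> pt \<Rightarrow> real \<Rightarrow> real" where
  "ht G a t = (THE s. (t, s) \<in> Ta G a)"

definition Curve :: "pt set \<Rightarrow> pt \<Rightarrow> real \<Rightarrow> real \<Rightarrow> pt set" where
  "Curve G a p q = {(t, ht G a t) | t. t \<in> {p..q}}"

definition Good :: "pt set \<Rightarrow> pt \<Rightarrow> real \<Rightarrow> real \<Rightarrow> real \<Rightarrow> real \<Rightarrow> bool" where
  "Good G a \<delta> R p q \<longleftrightarrow> p \<le> q \<and> \<delta> > 0 \<and> (\<forall>t\<in>{p..q}. \<exists>s. (t, s) \<in> Ta G a \<and>
     (\<exists>u\<in>Arg G (t, s). fst u \<le> fst a - \<delta> \<and> snd u \<le> snd a - \<delta> \<and> norm u \<le> R) \<and>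
     (\<exists>v\<in>Arg G (t, s). fst a + \<delta> \<le> fst v \<and> snd a + \<delta> \<le> snd v \<and> norm v \<le> R))"

context mmset begin

lemma Ta_noncomp:
  assumes y: "y \<in> Ta G a" and y': "y' \<in> Ta G a" and le: "fst y \<le> fst y'" "snd y \<le> snd y'"
  shows "y = y'"
proof (rule ccontr)
  assume ne: "y \<noteq> y'"
  obtain v where v: "v \<in> Arg G y" "fst a < fst v" "snd a < snd v" using y unfolding Ta_def by blast
  obtain u' where u': "u' \<in> Arg G y'" "fst u' < fst a" "snd u' < snd a" using y' unfolding Ta_def by blast
  have mi: "(fst u' - fst v) * (snd y' - snd y) + (snd u' - snd v) * (fst y' - fst y) \<ge> 0"
    using mono_ineq[OF v(1) u'(1) Arg_memD(1)[OF v(1)] Arg_memD(1)[OF u'(1)]] .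
  have n1: "fst u' - fst v < 0" "snd u' - snd v < 0" using v u' by auto
  have "fst y < fst y' \<or> snd y < snd y'"
  proof (rule ccontr)
    assume "\<not> (fst y < fst y' \<or> snd y < snd y')"
    then have "fst y = fst y'" "snd y = snd y'" using le by auto
    then have "y = y'" by (simp add: prod_eq_iff)
    with ne show False by simp
  qed
  then have "(fst u' - fst v) * (snd y' - snd y) + (snd u' - snd v) * (fst y' - fst y) < 0"
  proof
    assume "fst y < fst y'"
    then have "(snd u' - snd v) * (fst y' - fst y) < 0" using n1 by (simp add: mult_neg_pos)
    moreover have "(fst u' - fst v) * (snd y' - snd y) \<le> 0" using n1 le by (simp add: mult_nonpos_nonneg)
    ultimately show ?thesis by linarith
  next
    assume "snd y < snd y'"
    then have "(fst u' - fst v) * (snd y' - snd y) < 0" using n1 by (simp add: mult_neg_pos)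
    moreover have "(snd u' - snd v) * (fst y' - fst y) \<le> 0" using n1 le by (simp add: mult_nonpos_nonneg)
    ultimately show ?thesis by linarith
  qed
  with mi show False by linarith
qed

lemma Ta_unique: "(t, s) \<in> Ta G a \<Longrightarrow> (t, s') \<in> Ta G a \<Longrightarrow> s = s'"
  using Ta_noncomp[of "(t,s)" a "(t,s')"] Ta_noncomp[of "(t,s')" a "(t,s)"] by (cases "s \<le> s'") auto

lemma ht_eq: "(t, s) \<in> Ta G a \<Longrightarrow> ht G a t = s"
  unfolding ht_def using Ta_unique by blast

lemma Ta_LHS: "y \<in> Ta G a \<Longrightarrow> y \<in> dom_Arg G \<and> y \<notin> udom_Arg G"
proof -
  assume "y \<in> Ta G a"
  then obtain u v where "u \<in> Arg G y" "v \<in> Arg G y" "fst u < fst a" "fst a < fst v" unfolding Ta_def by blast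
  then show ?thesis by (auto simp: dom_Arg_def udom_Arg_def)
qed

lemma Curve_sub: assumes "Good G a \<delta> R p q" shows "Curve G a p q \<subseteq> Ta G a"
proof
  fix y assume "y \<in> Curve G a p q"
  then obtain t where t: "t \<in> {p..q}" "y = (t, ht G a t)" by (auto simp: Curve_def)
  obtain s where "(t, s) \<in> Ta G a" using assms t(1) unfolding Good_def by blast
  then show "y \<in> Ta G a" using t(2) ht_eq by simp
qed

lemma Good_classD:
  assumes g: "Good G a \<delta> R p q"
  shows "Curve G a p q \<in> class_D"
proof -
  have pq: "p \<le> q" and dp: "\<delta> > 0" using g unfolding Good_def by blast+
  have gall: "\<forall>t\<in>{p..q}. \<exists>s. (t, s) \<in> Ta G a \<and>
     (\<exists>u\<in>Arg G (t, s). fst u \<le> fst a - \<delta> \<and> snd u \<le> snd a - \<delta> \<and> norm u \<le> R) \<and>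
     (\<exists>v\<in>Arg G (t, s). fst a + \<delta> \<le> fst v \<and> snd a + \<delta> \<le> snd v \<and> norm v \<le> R)"
    using g unfolding Good_def by (rule conjunct2[THEN conjunct2])
  have pt: "\<exists>u\<in>Arg G (t, ht G a t). fst u \<le> fst a - \<delta> \<and> snd u \<le> snd a - \<delta> \<and> norm u \<le> R"
           "\<exists>v\<in>Arg G (t, ht G a t). fst a + \<delta> \<le> fst v \<and> snd a + \<delta> \<le> snd v \<and> norm v \<le> R"
           "(t, ht G a t) \<in> Ta G a"
    if "t \<in> {p..q}" for t
  proof -
    have "\<exists>s. (t, s) \<in> Ta G a \<and>
     (\<exists>u\<in>Arg G (t, s). fst u \<le> fst a - \<delta> \<and> snd u \<le> snd a - \<delta> \<and> norm u \<le> R) \<and>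
     (\<exists>v\<in>Arg G (t, s). fst a + \<delta> \<le> fst v \<and> snd a + \<delta> \<le> snd v \<and> norm v \<le> R)"
      using gall that by (rule bspec)
    then obtain s where s0: "(t, s) \<in> Ta G a \<and>
     (\<exists>u\<in>Arg G (t, s). fst u \<le> fst a - \<delta> \<and> snd u \<le> snd a - \<delta> \<and> norm u \<le> R) \<and>
     (\<exists>v\<in>Arg G (t, s). fst a + \<delta> \<le> fst v \<and> snd a + \<delta> \<le> snd v \<and> norm v \<le> R)"
      by (rule exE)
    note s = conjunct1[OF s0] conjunct1[OF conjunct2[OF s0]] conjunct2[OF conjunct2[OF s0]]
    have hs: "ht G a t = s" using ht_eq[OF s(1)] .
    show "\<exists>u\<in>Arg G (t, ht G a t). fst u \<le> fst a - \<delta> \<and> snd u \<le> snd a - \<delta> \<and> norm u \<le> R"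
           "\<exists>v\<in>Arg G (t, ht G a t). fst a + \<delta> \<le> fst v \<and> snd a + \<delta> \<le> snd v \<and> norm v \<le> R"
           "(t, ht G a t) \<in> Ta G a" unfolding hs by (rule s(2), rule s(3), rule s(1))
  qed
  have Rd: "\<delta> \<le> R"
  proof -
    have pp: "p \<in> {p..q}" using pq by simp
    obtain u where u: "u \<in> Arg G (p, ht G a p)" "fst u \<le> fst a - \<delta>" "snd u \<le> snd a - \<delta>" "norm u \<le> R" using pt(1)[OF pp] by blast
    obtain v where v: "v \<in> Arg G (p, ht G a p)" "fst a + \<delta> \<le> fst v" "snd a + \<delta> \<le> snd v" "norm v \<le> R" using pt(2)[OF pp] by blast
    have "fst v - fst u \<le> 2 * R" using abs_fst_le_norm[of u] abs_fst_le_norm[of v] u(4) v(4) by linarith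
    then show ?thesis using u(2) v(2) by linarith
  qed
  have Rp: "R > 0" using Rd dp by linarith
  define h where "h = ht G a"
  define K where "K = R / \<delta>"
  have Kp: "K > 0" using Rp dp by (simp add: K_def)
  have main: "h t < h s \<and> (t - s) / K \<le> h s - h t \<and> h s - h t \<le> K * (t - s)"
    if st: "s \<in> {p..q}" "t \<in> {p..q}" "s < t" for s t
  proof -
    obtain u where u: "u \<in> Arg G (s, h s)" "fst u \<le> fst a - \<delta>" "snd u \<le> snd a - \<delta>" "norm u \<le> R"
      using pt(1)[OF st(1)] unfolding h_def by blast
    obtain v where v: "v \<in> Arg G (s, h s)" "fst a + \<delta> \<le> fst v" "snd a + \<delta> \<le> snd v" "norm v \<le> R"
      using pt(2)[OF st(1)] unfolding h_def by blast
    obtain u' where u': "u' \<in> Arg G (t, h t)" "fst u' \<le> fst a - \<delta>" "snd u' \<le> snd a - \<delta>" "norm u' \<le> R"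
      using pt(1)[OF st(2)] unfolding h_def by blast
    obtain v' where v': "v' \<in> Arg G (t, h t)" "fst a + \<delta> \<le> fst v'" "snd a + \<delta> \<le> snd v'" "norm v' \<le> R"
      using pt(2)[OF st(2)] unfolding h_def by blast
    have T1: "(s, h s) \<in> Ta G a" "(t, h t) \<in> Ta G a" using pt(3) st unfolding h_def by auto
    have hlt: "h t < h s"
    proof (rule ccontr)
      assume "\<not> h t < h s"
      then have "(s, h s) = (t, h t)" using Ta_noncomp[OF T1(1) T1(2)] st(3) by simp
      then show False using st(3) by simp
    qed
    define d1 where "d1 = t - s"
    define d2 where "d2 = h s - h t"
    have d1p: "d1 > 0" and d2p: "d2 > 0" using st(3) hlt by (auto simp: d1_def d2_def)
    have bnd: "\<bar>fst x\<bar> \<le> R" "\<bar>snd x\<bar> \<le> R" if "norm x \<le> R" for x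
      using abs_fst_le_norm[of x] abs_snd_le_norm[of x] that by linarith+
    have m1: "(fst u' - fst v) * (h t - h s) + (snd u' - snd v) * (t - s) \<ge> 0"
      using mono_ineq[OF v(1) u'(1) Arg_memD(1)[OF v(1)] Arg_memD(1)[OF u'(1)]] by simp
    have m2: "(fst v' - fst u) * (h t - h s) + (snd v' - snd u) * (t - s) \<ge> 0"
      using mono_ineq[OF u(1) v'(1) Arg_memD(1)[OF u(1)] Arg_memD(1)[OF v'(1)]] by simp
    define A where "A = fst v - fst u'"
    define B where "B = snd v - snd u'"
    define A' where "A' = fst v' - fst u"
    define B' where "B' = snd v' - snd u"
    have AB: "A \<le> 2 * R" "2 * \<delta> \<le> B" "2 * \<delta> \<le> A'" "B' \<le> 2 * R"
      using bnd[OF v(4)] bnd[OF u'(4)] bnd[OF v'(4)] bnd[OF u(4)] u v u' v'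
      by (auto simp: A_def B_def A'_def B'_def)
    have i1: "B * d1 \<le> A * d2" using m1 by (simp add: A_def B_def d1_def d2_def algebra_simps)
    have i2: "A' * d2 \<le> B' * d1" using m2 by (simp add: A'_def B'_def d1_def d2_def algebra_simps)
    have "2 * \<delta> * d1 \<le> B * d1" using AB d1p by (intro mult_right_mono) auto
    moreover have "A * d2 \<le> 2 * R * d2" using AB d2p by (intro mult_right_mono) auto
    ultimately have l1: "\<delta> * d1 \<le> R * d2" using i1 by linarith
    have "2 * \<delta> * d2 \<le> A' * d2" using AB d2p by (intro mult_right_mono) auto
    moreover have "B' * d1 \<le> 2 * R * d1" using AB d1p by (intro mult_right_mono) auto
    ultimately have l2: "\<delta> * d2 \<le> R * d1" using i2 by linarith
    have "(t - s) / K \<le> h s - h t"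
    proof -
      have "(t - s) / K = \<delta> * d1 / R" using dp Rp by (simp add: K_def d1_def field_simps)
      also have "\<dots> \<le> d2" using l1 Rp by (simp add: pos_divide_le_eq mult.commute)
      finally show ?thesis by (simp add: d2_def)
    qed
    moreover have "h s - h t \<le> K * (t - s)"
    proof -
      have "K * (t - s) = R * d1 / \<delta>" using dp Rp by (simp add: K_def d1_def field_simps)
      moreover have "d2 \<le> R * d1 / \<delta>" using l2 dp by (simp add: pos_le_divide_eq mult.commute)
      ultimately show ?thesis by (simp add: d2_def)
    qed
    ultimately show ?thesis using hlt by simp
  qed
  have c2: "\<forall>s\<in>{p..q}. \<forall>t\<in>{p..q}. s < t \<longrightarrow> ht G a t < ht G a s" using main unfolding h_def by blast
  have c3: "\<exists>K>0. \<forall>s\<in>{p..q}. \<forall>t\<in>{p..q}. s < t \<longrightarrow> (t - s) / K \<le> ht G a s - ht G a t \<and> ht G a s - ht G a t \<le> K * (t - s)"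
    using main Kp unfolding h_def by blast
  show ?thesis unfolding class_D_def Curve_def mem_Collect_eq
    by (intro exI[of _ p] exI[of _ q] exI[of _ "ht G a"] conjI pq c2 c3 refl)
qed

end

lemma dist_vert: "dist ((t::real), (s::real)) (t, s') = \<bar>s - s'\<bar>"
  by (simp add: dist_Pair_Pair dist_real_def)
lemma dist_horiz: "dist ((t::real), (s::real)) (t', s) = \<bar>t - t'\<bar>"
  by (simp add: dist_Pair_Pair dist_real_def)

context mmset begin

lemma usc_B:
  assumes y: "y \<in> BB G" and V: "open V" "Arg G y \<subseteq> V"
  shows "\<exists>\<rho>>0. ball y \<rho> \<subseteq> BB G \<and> (\<forall>z\<in>ball y \<rho>. Arg G z \<noteq> {} \<and> Arg G z \<subseteq> V)"
proof -
  obtain \<rho>0 R where r0: "\<rho>0 > 0" "ball y \<rho>0 \<subseteq> BB G" "\<forall>z\<in>ball y \<rho>0. Arg G z \<noteq> {} \<and> (\<forall>x\<in>Arg G z. norm x \<le> R)"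
    using LC[OF y] by blast
  have "\<exists>\<rho>>0. \<forall>z\<in>ball y \<rho> \<inter> BB G. Arg G z \<subseteq> V"
  proof (rule usc[OF r0(1)])
    show "\<And>z x'. z \<in> ball y \<rho>0 \<inter> BB G \<Longrightarrow> x' \<in> Arg G z \<Longrightarrow> norm x' \<le> R" using r0(3) by auto
  qed (use V in auto)
  then obtain \<rho>1 where r1: "\<rho>1 > 0" "\<forall>z\<in>ball y \<rho>1 \<inter> BB G. Arg G z \<subseteq> V" by blast
  define \<rho> where "\<rho> = min \<rho>0 \<rho>1"
  have "\<rho> > 0" using r0 r1 by (simp add: \<rho>_def)
  moreover have "ball y \<rho> \<subseteq> BB G" using r0(2) by (auto simp: \<rho>_def)
  moreover have "\<forall>z\<in>ball y \<rho>. Arg G z \<noteq> {} \<and> Arg G z \<subseteq> V"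
  proof
    fix z assume z: "z \<in> ball y \<rho>"
    then have "z \<in> ball y \<rho>0" "z \<in> ball y \<rho>1" by (auto simp: \<rho>_def)
    then show "Arg G z \<noteq> {} \<and> Arg G z \<subseteq> V" using r0(2,3) r1(2) by blast
  qed
  ultimately show ?thesis by blast
qed

lemma vert_mono:
  assumes "fst z = fst z'" "snd z < snd z'" "x \<in> Arg G z" "x' \<in> Arg G z'"
  shows "fst x \<le> fst x'"
proof -
  have "(fst x' - fst x) * (snd z' - snd z) + (snd x' - snd x) * (fst z' - fst z) \<ge> 0"
    using mono_ineq[OF assms(3,4) Arg_memD(1)[OF assms(3)] Arg_memD(1)[OF assms(4)]] .
  then have "(fst x' - fst x) * (snd z' - snd z) \<ge> 0" using assms(1) by simp
  then show ?thesis using assms(2) by (simp add: zero_le_mult_iff)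
qed

lemma LocalCurve:
  assumes y: "y \<in> BB G" and A: "Arg G y = {u, v}"
    and a: "fst u < fst a" "snd u < snd a" "fst a < fst v" "snd a < snd v"
  shows "\<exists>\<epsilon>>0. \<exists>\<delta>>0. \<exists>R. \<forall>t. \<bar>t - fst y\<bar> < \<epsilon> \<longrightarrow> (\<exists>s. (t, s) \<in> Ta G a \<and>
     (\<exists>u'\<in>Arg G (t, s). fst u' \<le> fst a - \<delta> \<and> snd u' \<le> snd a - \<delta> \<and> norm u' \<le> R) \<and>
     (\<exists>v'\<in>Arg G (t, s). fst a + \<delta> \<le> fst v' \<and> snd a + \<delta> \<le> snd v' \<and> norm v' \<le> R))"
proof -
  define \<delta> where "\<delta> = min (min (fst a - fst u) (snd a - snd u)) (min (fst v - fst a) (snd v - snd a)) / 2"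
  have dp: "\<delta> > 0" using a by (simp add: \<delta>_def)
  have gaps: "2 * \<delta> \<le> fst a - fst u" "2 * \<delta> \<le> snd a - snd u" "2 * \<delta> \<le> fst v - fst a" "2 * \<delta> \<le> snd v - snd a"
    by (simp_all add: \<delta>_def)
  define R where "R = max (norm u) (norm v) + \<delta>"
  define Nu where "Nu = ball u \<delta>"
  define Nv where "Nv = ball v \<delta>"
  have cu: "fst x \<le> fst a - \<delta> \<and> snd x \<le> snd a - \<delta> \<and> norm x \<le> R" if "x \<in> cball u \<delta>" for x
  proof -
    have d: "dist u x \<le> \<delta>" using that by simp
    have "norm x \<le> norm u + dist u x" by (metis dist_norm norm_minus_commute norm_triangle_sub)
    then show ?thesis using d fst_le_dist[of u x] snd_le_dist[of u x] gaps by (auto simp: R_def)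
  qed
  have cv: "fst a + \<delta> \<le> fst x \<and> snd a + \<delta> \<le> snd x \<and> norm x \<le> R" if "x \<in> cball v \<delta>" for x
  proof -
    have d: "dist v x \<le> \<delta>" using that by simp
    have "norm x \<le> norm v + dist v x" by (metis dist_norm norm_minus_commute norm_triangle_sub)
    then show ?thesis using d fst_le_dist[of v x] snd_le_dist[of v x] gaps by (auto simp: R_def)
  qed
  have disj: "x \<notin> cball v \<delta>" if xu: "x \<in> cball u \<delta>" for x
  proof
    assume "x \<in> cball v \<delta>"
    from cv[OF this] cu[OF xu] dp show False by linarith
  qed
  have Nuc: "Nu \<subseteq> cball u \<delta>" "Nv \<subseteq> cball v \<delta>" by (auto simp: Nu_def Nv_def)
  have NuNv: "x \<notin> Nv" if "x \<in> Nu" for x using disj Nuc that by blast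
  obtain \<rho> where r: "\<rho> > 0" "ball y \<rho> \<subseteq> BB G" "\<forall>z\<in>ball y \<rho>. Arg G z \<noteq> {} \<and> Arg G z \<subseteq> Nu \<union> Nv"
    using usc_B[OF y, of "Nu \<union> Nv"] A dp by (auto simp: Nu_def Nv_def)
  define \<eta> where "\<eta> = \<rho> / 2"
  have ep: "\<eta> > 0" using r by (simp add: \<eta>_def)
  define Pm where "Pm = (fst y, snd y - \<eta>)"
  define Pp where "Pp = (fst y, snd y + \<eta>)"
  have Pmb: "Pm \<in> ball y \<rho>" "Pm \<in> BB G"
  proof -
    have "dist y Pm = \<bar>snd y - (snd y - \<eta>)\<bar>" using dist_vert[of "fst y" "snd y" "snd y - \<eta>"] by (simp add: Pm_def)
    then have "dist y Pm < \<rho>" using ep by (simp add: \<eta>_def)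
    then show "Pm \<in> ball y \<rho>" by simp
    then show "Pm \<in> BB G" using r(2) by blast
  qed
  have Ppb: "Pp \<in> ball y \<rho>" "Pp \<in> BB G"
  proof -
    have "dist y Pp = \<bar>snd y - (snd y + \<eta>)\<bar>" using dist_vert[of "fst y" "snd y" "snd y + \<eta>"] by (simp add: Pp_def)
    then have "dist y Pp < \<rho>" using ep by (simp add: \<eta>_def)
    then show "Pp \<in> ball y \<rho>" by simp
    then show "Pp \<in> BB G" using r(2) by blast
  qed
  have uA: "u \<in> Arg G y" and vA: "v \<in> Arg G y" using A by auto
  have ArgPm: "Arg G Pm \<subseteq> Nu"
  proof
    fix x assume x: "x \<in> Arg G Pm"
    have "fst x \<le> fst u" by (rule vert_mono[OF _ _ x uA]) (use ep in \<open>auto simp: Pm_def\<close>)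
    moreover have "x \<in> Nu \<union> Nv" using r(3) Pmb(1) x by blast
    moreover have "x \<in> Nv \<Longrightarrow> False" using cv[of x] Nuc(2) \<open>fst x \<le> fst u\<close> gaps dp by auto
    ultimately show "x \<in> Nu" by blast
  qed
  have ArgPp: "Arg G Pp \<subseteq> Nv"
  proof
    fix x assume x: "x \<in> Arg G Pp"
    have "fst v \<le> fst x" by (rule vert_mono[OF _ _ vA x]) (use ep in \<open>auto simp: Pp_def\<close>)
    moreover have "x \<in> Nu \<union> Nv" using r(3) Ppb(1) x by blast
    moreover have "x \<in> Nu \<Longrightarrow> False" using cu[of x] Nuc(1) \<open>fst v \<le> fst x\<close> gaps dp by auto
    ultimately show "x \<in> Nv" by blast
  qed
  obtain \<rho>m where rm: "\<rho>m > 0" "\<forall>z\<in>ball Pm \<rho>m. Arg G z \<noteq> {} \<and> Arg G z \<subseteq> Nu"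
    using usc_B[OF Pmb(2), of Nu] ArgPm by (auto simp: Nu_def)
  obtain \<rho>p where rp: "\<rho>p > 0" "\<forall>z\<in>ball Pp \<rho>p. Arg G z \<noteq> {} \<and> Arg G z \<subseteq> Nv"
    using usc_B[OF Ppb(2), of Nv] ArgPp by (auto simp: Nv_def)
  define \<epsilon> where "\<epsilon> = min (min \<rho>m \<rho>p) \<eta>"
  have \<epsilon>: "\<epsilon> > 0" using rm rp ep by (simp add: \<epsilon>_def)
  have "\<forall>t. \<bar>t - fst y\<bar> < \<epsilon> \<longrightarrow> (\<exists>s. (t, s) \<in> Ta G a \<and>
     (\<exists>u'\<in>Arg G (t, s). fst u' \<le> fst a - \<delta> \<and> snd u' \<le> snd a - \<delta> \<and> norm u' \<le> R) \<and>
     (\<exists>v'\<in>Arg G (t, s). fst a + \<delta> \<le> fst v' \<and> snd a + \<delta> \<le> snd v' \<and> norm v' \<le> R))"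
  proof (intro allI impI)
    fix t assume t: "\<bar>t - fst y\<bar> < \<epsilon>"
    have inball: "(t, s) \<in> ball y \<rho>" if "s \<in> {snd y - \<eta>..snd y + \<eta>}" for s
    proof -
      have "dist y (t, s) \<le> \<bar>fst y - t\<bar> + \<bar>snd y - s\<bar>" using dist_le_abs[of y "(t,s)"] by simp
      moreover have "\<bar>fst y - t\<bar> < \<eta>" using t by (simp add: \<epsilon>_def abs_minus_commute)
      moreover have "\<bar>snd y - s\<bar> \<le> \<eta>" using that by auto
      ultimately show ?thesis by (simp add: \<eta>_def)
    qed
    have lo: "Arg G (t, snd y - \<eta>) \<noteq> {} \<and> Arg G (t, snd y - \<eta>) \<subseteq> Nu"
    proof -
      have "dist Pm (t, snd y - \<eta>) = \<bar>fst y - t\<bar>" by (simp add: Pm_def dist_horiz)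
      then have "(t, snd y - \<eta>) \<in> ball Pm \<rho>m" using t by (simp add: \<epsilon>_def abs_minus_commute)
      then show ?thesis using rm(2) by blast
    qed
    have hi: "Arg G (t, snd y + \<eta>) \<noteq> {} \<and> Arg G (t, snd y + \<eta>) \<subseteq> Nv"
    proof -
      have "dist Pp (t, snd y + \<eta>) = \<bar>fst y - t\<bar>" by (simp add: Pp_def dist_horiz)
      then have "(t, snd y + \<eta>) \<in> ball Pp \<rho>p" using t by (simp add: \<epsilon>_def abs_minus_commute)
      then show ?thesis using rp(2) by blast
    qed
    define St where "St = {s \<in> {snd y - \<eta>..snd y + \<eta>}. Arg G (t, s) \<inter> Nu \<noteq> {}}"
    have loSt: "snd y - \<eta> \<in> St" using lo ep by (auto simp: St_def)
    have bdd: "bdd_above St" by (rule bdd_aboveI[of _ "snd y + \<eta>"]) (auto simp: St_def)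
    define ss where "ss = Sup St"
    have ss_ge: "s \<le> ss" if "s \<in> St" for s using cSup_upper[OF that bdd] by (simp add: ss_def)
    have StNE: "St \<noteq> {}" using loSt by blast
    have ss_le: "ss \<le> snd y + \<eta>" unfolding ss_def by (rule cSup_least[OF StNE]) (auto simp: St_def)
    have ssr: "ss \<in> {snd y - \<eta>..snd y + \<eta>}" using ss_ge[OF loSt] ss_le by simp
    have Zb: "(t, ss) \<in> ball y \<rho>" using inball[OF ssr] .
    have ZB: "(t, ss) \<in> BB G" using Zb r(2) by blast
    have Zsub: "Arg G (t, ss) \<noteq> {}" "Arg G (t, ss) \<subseteq> Nu \<union> Nv" using r(3) Zb by auto
    have claimA: "\<exists>u'\<in>Arg G (t, ss). u' \<in> cball u \<delta>"
    proof (rule ccontr)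
      assume "\<not> ?thesis"
      then have "Arg G (t, ss) \<subseteq> Nv" using Zsub(2) Nuc(1) by blast
      then obtain \<rho>2 where r2: "\<rho>2 > 0" "\<forall>z\<in>ball (t, ss) \<rho>2. Arg G z \<noteq> {} \<and> Arg G z \<subseteq> Nv"
        using usc_B[OF ZB, of Nv] by (auto simp: Nv_def)
      have "\<exists>s\<in>St. ss - \<rho>2 < s"
      proof (rule ccontr)
        assume "\<not> ?thesis"
        then have "\<forall>s\<in>St. s \<le> ss - \<rho>2" by auto
        then have "ss \<le> ss - \<rho>2" unfolding ss_def by (intro cSup_least[OF StNE]) auto
        then show False using r2(1) by simp
      qed
      then obtain s where s: "s \<in> St" "ss - \<rho>2 < s" by blast
      have "dist (t, ss) (t, s) < \<rho>2" using s ss_ge[OF s(1)] by (simp add: dist_vert)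
      then have "Arg G (t, s) \<subseteq> Nv" using r2(2) by simp
      moreover have "Arg G (t, s) \<inter> Nu \<noteq> {}" using s(1) by (simp add: St_def)
      ultimately show False using NuNv by blast
    qed
    have claimB: "\<exists>v'\<in>Arg G (t, ss). v' \<in> cball v \<delta>"
    proof (rule ccontr)
      assume "\<not> ?thesis"
      then have sub: "Arg G (t, ss) \<subseteq> Nu" using Zsub(2) Nuc(2) by blast
      show False
      proof (cases "ss = snd y + \<eta>")
        case True
        then have "Arg G (t, ss) \<subseteq> Nv" using hi by simp
        then show False using sub Zsub(1) NuNv by blast
      next
        case False
        then have lt: "ss < snd y + \<eta>" using ss_le by simp
        obtain \<rho>3 where r3: "\<rho>3 > 0" "\<forall>z\<in>ball (t, ss) \<rho>3. Arg G z \<noteq> {} \<and> Arg G z \<subseteq> Nu"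
          using usc_B[OF ZB, of Nu] sub by (auto simp: Nu_def)
        define s' where "s' = min (ss + \<rho>3 / 2) (snd y + \<eta>)"
        have s'gt: "ss < s'" using lt r3(1) by (simp add: s'_def)
        have s'r: "s' \<in> {snd y - \<eta>..snd y + \<eta>}" using ssr s'gt by (auto simp: s'_def)
        have "dist (t, ss) (t, s') < \<rho>3" using s'gt r3(1) by (simp add: dist_vert s'_def)
        then have "Arg G (t, s') \<noteq> {} \<and> Arg G (t, s') \<subseteq> Nu" using r3(2) by simp
        then have "s' \<in> St" using s'r by (auto simp: St_def)
        then show False using ss_ge s'gt by fastforce
      qed
    qed
    obtain u' where u': "u' \<in> Arg G (t, ss)" "u' \<in> cball u \<delta>" using claimA by blast
    obtain v' where v': "v' \<in> Arg G (t, ss)" "v' \<in> cball v \<delta>" using claimB by blast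
    have "(t, ss) \<in> Ta G a" unfolding Ta_def using u' v' cu[OF u'(2)] cv[OF v'(2)] dp
      by (intro CollectI bexI[of _ u'] bexI[of _ v']) auto
    then show "\<exists>s. (t, s) \<in> Ta G a \<and>
     (\<exists>u'\<in>Arg G (t, s). fst u' \<le> fst a - \<delta> \<and> snd u' \<le> snd a - \<delta> \<and> norm u' \<le> R) \<and>
     (\<exists>v'\<in>Arg G (t, s). fst a + \<delta> \<le> fst v' \<and> snd a + \<delta> \<le> snd v' \<and> norm v' \<le> R)"
      using u' v' cu[OF u'(2)] cv[OF v'(2)] by blast
  qed
  then show ?thesis using \<epsilon> dp by blast
qed

end

lemma sing_D: "{y} \<in> class_D"
proof -
  have f1: "{y} = {(t, snd y) | t. t \<in> {fst y..fst y}}" by auto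
  have f2: "\<exists>K>0. \<forall>s\<in>{fst y..fst y}. \<forall>t\<in>{fst y..fst y}. s < t \<longrightarrow>
          (t - s) / K \<le> snd y - snd y \<and> snd y - snd y \<le> K * (t - s)"
    by (rule exI[of _ "1::real"]) auto
  have f3: "\<forall>s\<in>{fst y..fst y}. \<forall>t\<in>{fst y..fst y}. s < t \<longrightarrow> snd y < snd y" by auto
  show ?thesis unfolding class_D_def mem_Collect_eq
    apply (rule exI[of _ "fst y"], rule exI[of _ "fst y"], rule exI[of _ "\<lambda>_. snd y"])
    by (intro conjI order_refl f1 f2 f3)
qed

context mmset begin

lemma cover_curve:
  assumes y: "y \<in> BB G" "y \<notin> G" "y \<notin> Triple" "multi G y"
  shows "\<exists>a n m p q. fst a \<in> \<rat> \<and> snd a \<in> \<rat> \<and> p \<in> \<rat> \<and> q \<in> \<rat> \<and>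
     Good G a (1 / real (Suc n)) (real m) p q \<and> y \<in> Curve G a p q"
proof -
  obtain u v where uv: "u \<in> Arg G y" "v \<in> Arg G y" "u \<noteq> v" using y(4) unfolding multi_def by blast
  obtain u0 v0 where o: "u0 \<in> Arg G y" "v0 \<in> Arg G y" "fst u0 < fst v0" "snd u0 < snd v0"
    using off_G_order[OF y(2) uv] uv by blast
  have A: "Arg G y = {u0, v0}"
  proof
    show "{u0, v0} \<subseteq> Arg G y" using o by auto
    show "Arg G y \<subseteq> {u0, v0}"
    proof
      fix w assume w: "w \<in> Arg G y"
      show "w \<in> {u0, v0}"
      proof (rule ccontr)
        assume "w \<notin> {u0, v0}"
        then have "y \<in> Triple" unfolding Triple_def using y(2) o w
          by (intro CollectI conjI exI[of _ u0] exI[of _ v0] exI[of _ w]) auto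
        with y(3) show False by simp
      qed
    qed
  qed
  obtain a1 where a1: "a1 \<in> \<rat>" "fst u0 < a1" "a1 < fst v0" using Rats_dense_in_real[OF o(3)] by blast
  obtain a2 where a2: "a2 \<in> \<rat>" "snd u0 < a2" "a2 < snd v0" using Rats_dense_in_real[OF o(4)] by blast
  define a where "a = (a1, a2)"
  have "\<exists>\<epsilon>>0. \<exists>\<delta>>0. \<exists>R. \<forall>t. \<bar>t - fst y\<bar> < \<epsilon> \<longrightarrow> (\<exists>s. (t, s) \<in> Ta G a \<and>
     (\<exists>u'\<in>Arg G (t, s). fst u' \<le> fst a - \<delta> \<and> snd u' \<le> snd a - \<delta> \<and> norm u' \<le> R) \<and>
     (\<exists>v'\<in>Arg G (t, s). fst a + \<delta> \<le> fst v' \<and> snd a + \<delta> \<le> snd v' \<and> norm v' \<le> R))"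
    by (rule LocalCurve[OF y(1) A]) (use a1 a2 in \<open>simp_all add: a_def\<close>)
  then obtain \<epsilon> \<delta> R where L: "\<epsilon> > 0" "\<delta> > 0" "\<forall>t. \<bar>t - fst y\<bar> < \<epsilon> \<longrightarrow> (\<exists>s. (t, s) \<in> Ta G a \<and>
     (\<exists>u'\<in>Arg G (t, s). fst u' \<le> fst a - \<delta> \<and> snd u' \<le> snd a - \<delta> \<and> norm u' \<le> R) \<and>
     (\<exists>v'\<in>Arg G (t, s). fst a + \<delta> \<le> fst v' \<and> snd a + \<delta> \<le> snd v' \<and> norm v' \<le> R))"
    by blast
  obtain N where N: "inverse (real (Suc N)) < \<delta>" using reals_Archimedean[OF L(2)] by blast
  define m where "m = nat \<lceil>R\<rceil>"
  have Rm: "R \<le> real m" unfolding m_def by linarith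
  have "fst y - \<epsilon> < fst y" using L(1) by simp
  then obtain p where p: "p \<in> \<rat>" "fst y - \<epsilon> < p" "p < fst y" using Rats_dense_in_real by blast
  have "fst y < fst y + \<epsilon>" using L(1) by simp
  then obtain q where q: "q \<in> \<rat>" "fst y < q" "q < fst y + \<epsilon>" using Rats_dense_in_real by blast
  define d where "d = 1 / real (Suc N)"
  have d: "d > 0" "d \<le> \<delta>" using N by (auto simp: d_def inverse_eq_divide)
  have "Good G a d (real m) p q"
    unfolding Good_def
  proof (intro conjI ballI)
    show "p \<le> q" using p q by simp
    show "d > 0" by (fact d(1))
    fix t assume t: "t \<in> {p..q}"
    then have "\<bar>t - fst y\<bar> < \<epsilon>" using p q by auto
    then obtain s where s: "(t, s) \<in> Ta G a"
       "\<exists>u'\<in>Arg G (t, s). fst u' \<le> fst a - \<delta> \<and> snd u' \<le> snd a - \<delta> \<and> norm u' \<le> R"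
       "\<exists>v'\<in>Arg G (t, s). fst a + \<delta> \<le> fst v' \<and> snd a + \<delta> \<le> snd v' \<and> norm v' \<le> R"
      using L(3) by blast
    obtain u' where u': "u' \<in> Arg G (t, s)" "fst u' \<le> fst a - \<delta>" "snd u' \<le> snd a - \<delta>" "norm u' \<le> R" using s(2) by blast
    obtain v' where v': "v' \<in> Arg G (t, s)" "fst a + \<delta> \<le> fst v'" "snd a + \<delta> \<le> snd v'" "norm v' \<le> R" using s(3) by blast
    have "fst u' \<le> fst a - d \<and> snd u' \<le> snd a - d \<and> norm u' \<le> real m" using u' d Rm by linarith
    moreover have "fst a + d \<le> fst v' \<and> snd a + d \<le> snd v' \<and> norm v' \<le> real m" using v' d Rm by linarith
    ultimately show "\<exists>s. (t, s) \<in> Ta G a \<and>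
       (\<exists>u\<in>Arg G (t, s). fst u \<le> fst a - d \<and> snd u \<le> snd a - d \<and> norm u \<le> real m) \<and>
       (\<exists>v\<in>Arg G (t, s). fst a + d \<le> fst v \<and> snd a + d \<le> snd v \<and> norm v \<le> real m)"
      using s(1) u'(1) v'(1) by blast
  qed
  moreover have "y \<in> Curve G a p q"
  proof -
    have "y \<in> Ta G a" unfolding Ta_def using o a1 a2 by (auto simp: a_def)
    then have "(fst y, snd y) \<in> Ta G a" by simp
    then have "ht G a (fst y) = snd y" by (rule ht_eq)
    moreover have "fst y \<in> {p..q}" using p q by simp
    ultimately show ?thesis unfolding Curve_def by (metis (mono_tags, lifting) mem_Collect_eq prod.collapse)
  qed
  ultimately show ?thesis using a1 a2 p q unfolding d_def a_def by fastforce
qed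

lemma nonstrict:
  assumes "BB G = {}" "a \<in> G" "b \<in> G"
  shows "fst a = fst b \<or> snd a = snd b"
proof (rule ccontr)
  assume ne: "\<not> ?thesis"
  have "(fst a < fst b \<and> snd a < snd b) \<or> (fst b < fst a \<and> snd b < snd a)"
    using comparable[OF assms(2,3)] ne by auto
  then obtain p q where pq: "p \<in> G" "q \<in> G" "fst p < fst q" "snd p < snd q" using assms(2,3) by blast
  define m where "m = ((fst p + fst q) / 2, (snd p + snd q) / 2)"
  have "fst p < fst m" "fst m < fst q" "snd p < snd m" "snd m < snd q" using pq(3,4) by (simp_all add: m_def)
  then have "m \<in> BB G" unfolding BB_def using pq(1,2) by blast
  with assms(1) show False by simp
qed

lemma BB_empty_case:
  assumes e: "BB G = {}"
  shows "dom_Arg G \<subseteq> E_set G"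
proof
  fix y assume yd: "y \<in> dom_Arg G"
  then obtain x where x: "x \<in> Arg G y" by (auto simp: dom_Arg_def)
  have xG: "x \<in> G" using Arg_memD(1)[OF x] .
  show "y \<in> E_set G"
  proof (cases "\<forall>z\<in>G. fst z = fst x")
    case True
    define L where "L = {z::pt. fst z = fst x}"
    have "monotone_set L" by (auto simp: monotone_set_def L_def cost_def)
    then have GL: "L = G" using True by (intro maxl) (auto simp: L_def)
    have fy: "fst y = fst x"
    proof (rule ccontr)
      assume ne: "fst y \<noteq> fst x"
      define k where "k = fst x - fst y"
      have "k \<noteq> 0" using ne by (simp add: k_def)
      then have kn: "k * k > 0" using not_real_square_gt_zero[of k] by blast
      define z where "z = (fst x, snd x - k)"
      have zG: "z \<in> G" using GL by (auto simp: L_def z_def)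
      have "cost z y = cost x y - k * k" by (simp add: cost_def z_def k_def algebra_simps)
      then show False using Arg_memD(2)[OF x zG] kn by linarith
    qed
    have "y \<in> E_i G 1 (fst y)" "(fst y, snd y + 1) \<in> E_i G 1 (fst y)"
      using GL fy by (auto simp: E_i_def coord_def L_def)
    moreover have "y \<noteq> (fst y, snd y + 1)" by (metis add_cancel_right_right one_neq_zero snd_conv)
    ultimately have "fst y \<in> T_i G 1" unfolding T_i_def by blast
    then show ?thesis using \<open>y \<in> E_i G 1 (fst y)\<close> by (auto simp: E_set_def)
  next
    case False
    then obtain r where r: "r \<in> G" "fst r \<noteq> fst x" by blast
    have srx: "snd r = snd x" using nonstrict[OF e r(1) xG] r(2) by simp
    have hor: "\<forall>z\<in>G. snd z = snd x"
    proof
      fix z assume z: "z \<in> G"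
      show "snd z = snd x"
      proof (rule ccontr)
        assume ne: "snd z \<noteq> snd x"
        have "fst z = fst x" using nonstrict[OF e z xG] ne by simp
        moreover have "fst z = fst r" using nonstrict[OF e z r(1)] ne srx by simp
        ultimately show False using r(2) by simp
      qed
    qed
    define L where "L = {z::pt. snd z = snd x}"
    have "monotone_set L" by (auto simp: monotone_set_def L_def cost_def)
    then have GL: "L = G" using hor by (intro maxl) (auto simp: L_def)
    have sy: "snd y = snd x"
    proof (rule ccontr)
      assume ne: "snd y \<noteq> snd x"
      define k where "k = snd x - snd y"
      have "k \<noteq> 0" using ne by (simp add: k_def)
      then have kn: "k * k > 0" using not_real_square_gt_zero[of k] by blast
      define z where "z = (fst x - k, snd x)"
      have zG: "z \<in> G" using GL by (auto simp: L_def z_def)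
      have "cost z y = cost x y - k * k" by (simp add: cost_def z_def k_def algebra_simps)
      then show False using Arg_memD(2)[OF x zG] kn by linarith
    qed
    have "y \<in> E_i G 2 (snd y)" "(fst y + 1, snd y) \<in> E_i G 2 (snd y)"
      using GL sy by (auto simp: E_i_def coord_def L_def)
    moreover have "y \<noteq> (fst y + 1, snd y)" by (metis add_cancel_right_right one_neq_zero fst_conv)
    ultimately have "snd y \<in> T_i G 2" unfolding T_i_def by blast
    then show ?thesis using \<open>y \<in> E_i G 2 (snd y)\<close> by (auto simp: E_set_def)
  qed
qed

end

theorem theorem10:
  fixes G :: "(real \<times> real) set"
  assumes "maximal_monotone G"
  shows "\<exists>D. (\<exists>F. countable F \<and> F \<subseteq> class_D \<and> D = \<Union>F) \<and>
           dom_Arg G - (dom_grad G \<inter> udom_Arg G) = D \<union> E_set G"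
proof -
  interpret mmset G using assms by unfold_locales
  define LHS where "LHS = dom_Arg G - (dom_grad G \<inter> udom_Arg G)"
  have ELHS: "E_set G \<subseteq> LHS" using E_sub by (auto simp: LHS_def)
  show ?thesis
  proof (cases "BB G = {}")
    case True
    have "LHS \<subseteq> E_set G" using BB_empty_case[OF True] by (auto simp: LHS_def)
    then have "LHS = \<Union>{} \<union> E_set G" using ELHS by auto
    then show ?thesis unfolding LHS_def by blast
  next
    case False
    define S where "S = LHS - E_set G"
    define Z where "Z = Triple \<union> {y \<in> dom_phi G. y \<notin> BB G \<and> y \<notin> G \<and> multi G y} \<union> {y \<in> dom_Arg G. \<not> NoEsc G y}"
    have Zc: "countable Z" unfolding Z_def
      using Triple_countable LineMulti_countable EscSet_count[OF assms] by blast
    define Idx where "Idx = {(a, n, m, p, q). fst a \<in> \<rat> \<and> snd a \<in> \<rat> \<and> p \<in> \<rat> \<and> q \<in> \<rat> \<and>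
        Good G a (1 / real (Suc n)) (real (m::nat)) p q}"
    define CF where "CF = (\<lambda>(a, n, m, p, q). Curve G a p q) ` Idx"
    have "Idx \<subseteq> (\<rat> \<times> \<rat>) \<times> (UNIV :: nat set) \<times> (UNIV :: nat set) \<times> \<rat> \<times> \<rat>"
      by (auto simp: Idx_def mem_Times_iff)
    moreover have "countable ((\<rat> \<times> \<rat>) \<times> (UNIV :: nat set) \<times> (UNIV :: nat set) \<times> \<rat> \<times> \<rat>)"
      by (intro countable_SIGMA countable_rat countableI_type)
    ultimately have "countable Idx" by (rule countable_subset)
    then have CFc: "countable CF" unfolding CF_def by (rule countable_image)
    have CFD: "CF \<subseteq> class_D" unfolding CF_def Idx_def using Good_classD by auto
    have CFL: "\<Union>CF \<subseteq> LHS"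
    proof
      fix y assume "y \<in> \<Union>CF"
      then obtain a n m p q where g: "Good G a (1 / real (Suc n)) (real m) p q" and yc: "y \<in> Curve G a p q"
        unfolding CF_def Idx_def by auto
      then have "y \<in> Ta G a" using Curve_sub[OF g] by blast
      then show "y \<in> LHS" using Ta_LHS by (auto simp: LHS_def)
    qed
    have cover: "S \<subseteq> Z \<union> \<Union>CF"
    proof
      fix y assume yS: "y \<in> S"
      then have yd: "y \<in> dom_Arg G" and nd: "\<not> (y \<in> dom_grad G \<and> y \<in> udom_Arg G)" and nE: "y \<notin> E_set G"
        by (auto simp: S_def LHS_def)
      show "y \<in> Z \<union> \<Union>CF"
      proof (cases "\<exists>x. Arg G y = {x}")
        case True
        then obtain x where x: "Arg G y = {x}" by blast
        show ?thesis
        proof (cases "y \<in> BB G")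
          case True
          then show ?thesis using dom_grad_B[OF True x] nd by simp
        next
          case yB: False
          show ?thesis
          proof (cases "NoEsc G y")
            case True
            then show ?thesis using dom_grad_bd[OF False yd yB x True] nd by simp
          next
            case False
            then show ?thesis using yd by (auto simp: Z_def)
          qed
        qed
      next
        case False
        obtain u where u: "u \<in> Arg G y" using yd by (auto simp: dom_Arg_def)
        have "\<exists>w\<in>Arg G y. w \<noteq> u"
        proof (rule ccontr)
          assume "\<not> (\<exists>w\<in>Arg G y. w \<noteq> u)"
          then have "Arg G y = {u}" using u by blast
          with False show False by blast
        qed
        then obtain w where w: "w \<in> Arg G y" "w \<noteq> u" by blast
        have mu: "multi G y" unfolding multi_def using u w by blast
        have yG: "y \<notin> G"
        proof
          assume yG: "y \<in> G"
          have "y \<in> Arg G y" by (rule Arg_G_self[OF yG])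
          then have "\<exists>z\<in>Arg G y. z \<noteq> y" using u w by metis
          then show False using G_multi_E[OF yG] nE by blast
        qed
        show ?thesis
        proof (cases "y \<in> BB G")
          case False
          have "y \<in> dom_phi G" using yd dom_Arg_dom_phi by blast
          then show ?thesis using False yG mu by (auto simp: Z_def)
        next
          case yB: True
          show ?thesis
          proof (cases "y \<in> Triple")
            case True then show ?thesis by (auto simp: Z_def)
          next
            case False
            obtain a n m p q where h: "fst a \<in> \<rat>" "snd a \<in> \<rat>" "p \<in> \<rat>" "q \<in> \<rat>"
              "Good G a (1 / real (Suc n)) (real m) p q" "y \<in> Curve G a p q"
              using cover_curve[OF yB yG False mu] by blast
            then have "(a, n, m, p, q) \<in> Idx" by (simp add: Idx_def)
            then have "Curve G a p q \<in> CF" unfolding CF_def by (rule rev_image_eqI) simp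
            then show ?thesis using h(6) by blast
          qed
        qed
      qed
    qed
    define F where "F = CF \<union> (\<lambda>y. {y}) ` (S \<inter> Z)"
    have Fc: "countable F" unfolding F_def using CFc Zc by auto
    have FD: "F \<subseteq> class_D" unfolding F_def using CFD sing_D by auto
    have "LHS = \<Union>F \<union> E_set G"
    proof
      show "LHS \<subseteq> \<Union>F \<union> E_set G"
      proof
        fix y assume y: "y \<in> LHS"
        show "y \<in> \<Union>F \<union> E_set G"
        proof (cases "y \<in> E_set G")
          case False
          then have "y \<in> S" using y by (simp add: S_def)
          then have "y \<in> Z \<union> \<Union>CF" using cover by blast
          then show ?thesis using \<open>y \<in> S\<close> unfolding F_def by blast
        qed simp
      qed
      show "\<Union>F \<union> E_set G \<subseteq> LHS" unfolding F_def using CFL ELHS by (auto simp: S_def)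
    qed
    then show ?thesis unfolding LHS_def using Fc FD by blast
  qed
qed


end
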